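(* Under the setting and additional assumptions below, the tracking variables generated by SONATA asymptotically track the average gradient: for all $i=1,\dots,I$, $\lim_{k\to\infty}\|\mathbf{y}_{(i)}^k-\bar{\mathbf{y}}_\phi^k\|=0$, where $\bar{\mathbf{y}}_\phi^k=\frac1I\sum_{j=1}^I\nabla f_j(\mathbf{x}_{(j)}^k)$; moreover $\sum_{k=0}^\infty\gamma^k\|\mathbf{y}_{(i)}^k-\bar{\mathbf{y}}_\phi^k\|<\infty$.
   Context: Problem: minimize $V(\mathbf{x})\triangleq F(\mathbf{x})+G(\mathbf{x})$, $F=\sum_{i=1}^If_i$, over $\mathbf{x}\in X$, where $X\subseteq\mathbb{R}^m$ is nonempty closed convex; each $f_i:O\to\mathbb{R}$ is $C^1$ on an open set $O\supseteq X$ with $\nabla f_i$ $L_i$-Lipschitz on $X$; $G:O\to\mathbb{R}$ is convex; $V$ is bounded below on $X$. Additional assumptions: $\|\nabla F(\mathbf{x})\|\le L_F<\infty$ and all subgradients of $G$ at $\mathbf{x}$ have norm $\le L_G<\infty$, for all $\mathbf{x}\in X$; step-sizes $\gamma^k\in(0,1]$ with $\sum_k\gamma^k=\infty$, $\sum_k(\gamma^k)^2<\infty$. Network: digraphs $G^k=(\{1,\dots,I\},E^k)$, $(j,i)\in E^k$ meaning $j$ can send to $i$, $B$-strongly connected ($\bigcup_{t=k}^{k+B-1}E^t$ strongly connected for every $k$). $\mathbf{A}^k=(a_{ij}^k)$: $a_{ij}^k=0$ if $j\ne i$ and $(j,i)\notin E^k$, $a_{ij}^k\ge\kappa$ if $(j,i)\in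 E^k$, $a_{ii}^k\ge\kappa$ ($\kappa>0$), nonnegative with $\mathbf{1}^T\mathbf{A}^k=\mathbf{1}^T$. Assumption III.14 on $\widetilde f_i:O\times O\to\mathbb{R}$: $\widetilde f_i(\cdot|\mathbf{x})$ is $\tau_i$-strongly convex on $X$ for all $\mathbf{x}\in X$; $C^1$ on $O$ with $\nabla\widetilde f_i(\mathbf{x}|\mathbf{x})=\nabla f_i(\mathbf{x})$; $\nabla\widetilde f_i(\mathbf{x}|\cdot)$ is $\widetilde L_i$-Lipschitz on $X$. SONATA: initialize $\mathbf{x}_{(i)}^0\in X$, $\phi_{(i)}^0=1$, $\mathbf{y}_{(i)}^0=\nabla f_i(\mathbf{x}_{(i)}^0)$; at iteration $k$, $\widetilde{\mathbf{x}}_i^k=\operatorname{argmin}_{\mathbf{x}\in X}\{\widetilde f_i(\mathbf{x}|\mathbf{x}_{(i)}^k)+(I\mathbf{y}_{(i)}^k-\nabla f_i(\mathbf{x}_{(i)}^k))^T(\mathbf{x}-\mathbf{x}_{(i)}^k)+G(\mathbf{x})\}$, $\mathbf{x}_{(i)}^{k+1/2}=\mathbf{x}_{(i)}^k+\gamma^k(\widetilde{\mathbf{x}}_i^k-\mathbf{x}_{(i)}^k)$, $\phi_{(i)}^{k+1}=\sum_ja_{ij}^k\phi_{(j)}^k$, $\mathbf{x}_{(i)}^{k+1}=\frac{1}{\phi_{(i)}^{k+1}}\sum_ja_{ij}^k\phi_{(j)}^k\mathbf{x}_{(j)}^{k+1/2}$, $\mathbf{y}_{(i)}^{k+1}=\frac{1}{\phi_{(i)}^{k+1}}\sum_ja_{ij}^k\phi_{(j)}^k\mathbf{y}_{(j)}^k+\frac{1}{\phi_{(i)}^{k+1}}(\nabla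 f_i(\mathbf{x}_{(i)}^{k+1})-\nabla f_i(\mathbf{x}_{(i)}^k))$. $\bar{\mathbf{y}}_\phi^k\triangleq\frac1I\sum_j\phi_{(j)}^k\mathbf{y}_{(j)}^k$, which equals $\frac1I\sum_j\nabla f_j(\mathbf{x}_{(j)}^k)$. *)

theory Defs
  imports "HOL-Analysis.Analysis"
begin

definition strongly_convex_on :: "real \<Rightarrow> 'a::real_normed_vector set \<Rightarrow> ('a \<Rightarrow> real) \<Rightarrow> bool" where
  "strongly_convex_on c S f \<longleftrightarrow>
     (\<forall>x\<in>S. \<forall>y\<in>S. \<forall>t::real. 0 \<le> t \<and> t \<le> 1 \<longrightarrow>
        f (t *\<^sub>R x + (1 - t) *\<^sub>R y) \<le> t * f x + (1 - t) * f y - c / 2 * t * (1 - t) * (norm (x - y))\<^sup>2)"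

definition is_subgradient :: "'a::real_inner set \<Rightarrow> ('a \<Rightarrow> real) \<Rightarrow> 'a \<Rightarrow> 'a \<Rightarrow> bool" where
  "is_subgradient Dom G x g \<longleftrightarrow> (\<forall>z\<in>Dom. G z \<ge> G x + inner g (z - x))"

definition strongly_connected_on :: "nat \<Rightarrow> (nat \<times> nat) set \<Rightarrow> bool" where
  "strongly_connected_on I Ed \<longleftrightarrow>
     (\<forall>i<I. \<forall>j<I. (i, j) \<in> (Ed \<inter> ({..<I} \<times> {..<I}))\<^sup>*)"

end

theory Submission
  imports Defs
begin



lemma subgrad_exists:
  fixes G :: "'a::euclidean_space \<Rightarrow> real"
  assumes cv: "convex_on Dom G" and op: "open Dom" and x: "x \<in> Dom"
  shows "\<exists>g. is_subgradient Dom G x g"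
proof -
  define S where "S = {zt :: 'a \<times> real. fst zt \<in> Dom \<and> G (fst zt) < snd zt}"
  have cD: "convex Dom" using cv convex_on_imp_convex by blast
  have cS: "convex S"
    unfolding convex_def S_def
  proof (clarsimp)
    fix a :: 'a and t :: real and b :: 'a and s u v :: real
    assume a: "a \<in> Dom" "G a < t" "b \<in> Dom" "G b < s" "0 \<le> u" "0 \<le> v" "u + v = 1"
    have m: "u *\<^sub>R a + v *\<^sub>R b \<in> Dom" using cD a unfolding convex_def by blast
    have v: "v = 1 - u" using a by simp
    have cvx: "G (u *\<^sub>R a + v *\<^sub>R b) \<le> u * G a + v * G b"
      using convex_onD[OF cv, of u b a] a unfolding v by (simp add: algebra_simps)
    show "u *\<^sub>R a + v *\<^sub>R b \<in> Dom \<and> G (u *\<^sub>R a + v *\<^sub>R b) < u * t + v * s"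
    proof -
      have "u * G a + v * G b < u * t + v * s"
      proof (cases "u = 0")
        case True then show ?thesis using a by simp
      next
        case False then have "u > 0" using a by simp
        then have "u * G a < u * t" using a by simp
        moreover have "v * G b \<le> v * s" using a by (simp add: mult_left_mono)
        ultimately show ?thesis by simp
      qed
      then show ?thesis using m cvx by simp
    qed
  qed
  have Sne: "S \<noteq> {}" using x unfolding S_def using gt_ex by (metis (mono_tags, lifting) empty_iff fst_conv mem_Collect_eq snd_conv)
  have disj: "S \<inter> {(x, G x)} = {}" unfolding S_def by auto
  obtain a b where a0: "a \<noteq> 0" and aS: "\<forall>w\<in>S. inner a w \<le> b" and aT: "\<forall>w\<in>{(x, G x)}. inner a w \<ge> b"
    using separating_hyperplane_sets[OF cS convex_singleton Sne _ disj] by blast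
  obtain p q where pq: "a = (p, q)" by (cases a)
  have key: "inner p z + q * t \<le> inner p x + q * G x" if "z \<in> Dom" "G z < t" for z t
    using aS aT that pq unfolding S_def by (force simp: inner_Pair)
  have qle: "q \<le> 0"
  proof (rule ccontr)
    assume "\<not> q \<le> 0" then have qp: "q > 0" by simp
    define t where "t = G x + 1 + (inner p x - inner p x + 1) / q"
    have "inner p x + q * t \<le> inner p x + q * G x" using key[OF x, of t] qp unfolding t_def
      by (smt (verit) divide_pos_pos)
    then show False using qp unfolding t_def by (simp add: algebra_simps)
  qed
  have qne: "q \<noteq> 0"
  proof
    assume q0: "q = 0"
    then have p0: "p \<noteq> 0" using a0 pq by (auto simp: zero_prod_def)
    obtain e where e: "e > 0" "ball x e \<subseteq> Dom" using op x open_contains_ball by blast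
    define z where "z = x + (e / 2 / norm p) *\<^sub>R p"
    have "dist x z < e" using e p0 unfolding z_def dist_norm by simp
    then have zD: "z \<in> Dom" using e by auto
    have "inner p z \<le> inner p x" using key[OF zD, of "G z + 1"] q0 by simp
    moreover have "inner p z = inner p x + (e / 2 / norm p) * inner p p" unfolding z_def by (simp add: inner_add_right)
    moreover have "inner p p > 0" using p0 by simp
    moreover have "e / 2 / norm p > 0" using e p0 by simp
    ultimately show False by (smt (verit) mult_pos_pos)
  qed
  with qle have qn: "q < 0" by simp
  define g where "g = (- 1 / q) *\<^sub>R p"
  have "G z \<ge> G x + inner g (z - x)" if z: "z \<in> Dom" for z
  proof (rule ccontr)
    assume "\<not> ?thesis"
    then have lt: "G z < G x + inner g (z - x)" by simp
    define t where "t = (G z + (G x + inner g (z - x))) / 2"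
    have t1: "G z < t" "t < G x + inner g (z - x)" using lt unfolding t_def by auto
    have "inner p z + q * t \<le> inner p x + q * G x" using key[OF z t1(1)] .
    then have "q * (t - G x) \<le> inner p (x - z)" by (simp add: algebra_simps inner_diff_right)
    then have "t - G x \<ge> inner p (x - z) / q" using qn by (simp add: pos_divide_le_eq neg_divide_le_eq mult.commute)
    moreover have "inner p (x - z) / q = inner g (z - x)" unfolding g_def
      by (simp add: inner_diff_right inner_diff_left algebra_simps divide_simps)
    ultimately show False using t1 by simp
  qed
  then show ?thesis unfolding is_subgradient_def by blast
qed



lemma sc_first_order:
  fixes h :: "'a::real_inner \<Rightarrow> real"
  assumes sc: "strongly_convex_on c X h" and x: "x \<in> X" and z: "z \<in> X"
    and d: "(h has_derivative (\<lambda>v. inner g v)) (at x)"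
  shows "h z \<ge> h x + inner g (z - x) + c / 2 * (norm (z - x))\<^sup>2"
proof -
  let ?l = "\<lambda>t::real. x + t *\<^sub>R (z - x)"
  have dl: "(?l has_derivative (\<lambda>s. s *\<^sub>R (z - x))) (at 0)"
    by (auto intro!: derivative_eq_intros)
  have "?l 0 = x" by simp
  have dc: "((h \<circ> ?l) has_derivative (\<lambda>s. inner g (s *\<^sub>R (z - x)))) (at 0)"
    using has_derivative_compose[OF dl, of h "\<lambda>v. inner g v"] d by (simp add: o_def)
  have "((h \<circ> ?l) has_field_derivative inner g (z - x)) (at 0)"
    using dc unfolding has_field_derivative_def
    by (simp add: inner_scaleR_right mult.commute[of _ "inner g (z - x)"] )
  then have lim0: "((\<lambda>t. ((h \<circ> ?l) t - (h \<circ> ?l) 0) / (t - 0)) \<longlongrightarrow> inner g (z - x)) (at 0)"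
    using has_field_derivative_iff by blast
  have lim1: "((\<lambda>t. (h (?l t) - h x) / t) \<longlongrightarrow> inner g (z - x)) (at_right 0)"
    using tendsto_mono[OF at_le[of "{0<..}" UNIV] lim0] by simp
  have lim2: "((\<lambda>t. h z - h x - c / 2 * (1 - t) * (norm (z - x))\<^sup>2) \<longlongrightarrow> h z - h x - c / 2 * (1 - 0) * (norm (z - x))\<^sup>2) (at_right 0)"
    by (intro tendsto_intros)
  have ev: "eventually (\<lambda>t. (h (?l t) - h x) / t \<le> h z - h x - c / 2 * (1 - t) * (norm (z - x))\<^sup>2) (at_right 0)"
    unfolding eventually_at_right_field
  proof (intro exI[of _ 1] conjI allI impI)
    show "(0::real) < 1" by simp
    fix t :: real assume t0: "0 < t" and t1: "t < 1"
    have t: "0 < t \<and> t < 1" using t0 t1 by simp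
    have eq: "t *\<^sub>R z + (1 - t) *\<^sub>R x = ?l t" by (simp add: algebra_simps)
    have "h (?l t) \<le> t * h z + (1 - t) * h x - c / 2 * t * (1 - t) * (norm (z - x))\<^sup>2"
    proof -
      have "h (t *\<^sub>R z + (1 - t) *\<^sub>R x) \<le> t * h z + (1 - t) * h x - c / 2 * t * (1 - t) * (norm (z - x))\<^sup>2"
        using sc z x t unfolding strongly_convex_on_def by auto
      then show ?thesis unfolding eq .
    qed
    then have "h (?l t) - h x \<le> t * (h z - h x - c / 2 * (1 - t) * (norm (z - x))\<^sup>2)"
      by (simp add: algebra_simps)
    then show "(h (?l t) - h x) / t \<le> h z - h x - c / 2 * (1 - t) * (norm (z - x))\<^sup>2"
      using t by (simp add: divide_le_eq mult.commute)
  qed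
  have "inner g (z - x) \<le> h z - h x - c / 2 * (1 - 0) * (norm (z - x))\<^sup>2"
    using tendsto_le[OF _ lim2 lim1 ev] by simp
  then show ?thesis by simp
qed



primrec Pm :: "(nat \<Rightarrow> nat \<Rightarrow> nat \<Rightarrow> real) \<Rightarrow> nat \<Rightarrow> nat \<Rightarrow> nat \<Rightarrow> nat \<Rightarrow> nat \<Rightarrow> real" where
  "Pm A I k 0 i j = (if i = j then 1 else 0)"
| "Pm A I k (Suc t) i j = (\<Sum>l<I. A (k + t) i l * Pm A I k t l j)"

lemma leave_set:
  assumes "(a, b) \<in> R\<^sup>*" "a \<in> S" "b \<notin> S"
  shows "\<exists>u v. (u, v) \<in> R \<and> u \<in> S \<and> v \<notin> S"
  using assms
proof (induction rule: rtrancl_induct)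
  case base then show ?case by simp
next
  case (step y z)
  then show ?case by (cases "y \<in> S") auto
qed

locale mixing =
  fixes I :: nat and E :: "nat \<Rightarrow> (nat \<times> nat) set" and B :: nat
    and A :: "nat \<Rightarrow> nat \<Rightarrow> nat \<Rightarrow> real" and \<kappa> :: real
  assumes I_pos: "0 < I"
    and B_pos: "0 < B"
    and E_sub: "\<And>k. E k \<subseteq> {..<I} \<times> {..<I}"
    and B_conn: "\<And>k. strongly_connected_on I (\<Union>t\<in>{k..<k+B}. E t)"
    and \<kappa>_pos: "0 < \<kappa>"
    and A_edge: "\<And>k i j. i < I \<Longrightarrow> j < I \<Longrightarrow> (j, i) \<in> E k \<Longrightarrow> A k i j \<ge> \<kappa>"
    and A_diag: "\<And>k i. i < I \<Longrightarrow> A k i i \<ge> \<kappa>"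
    and A_nonneg: "\<And>k i j. i < I \<Longrightarrow> j < I \<Longrightarrow> 0 \<le> A k i j"
    and A_colstoch: "\<And>k j. j < I \<Longrightarrow> (\<Sum>i<I. A k i j) = 1"
begin

lemma kappa_le1: "\<kappa> \<le> 1"
proof -
  have "\<kappa> \<le> A 0 0 0" using A_diag I_pos by simp
  also have "\<dots> \<le> (\<Sum>i<I. A 0 i 0)"
    using I_pos by (intro member_le_sum) (auto intro: A_nonneg)
  finally show ?thesis using A_colstoch I_pos by simp
qed

lemma Pm_nonneg: "i < I \<Longrightarrow> j < I \<Longrightarrow> 0 \<le> Pm A I k t i j"
  by (induction t arbitrary: i) (auto intro!: sum_nonneg mult_nonneg_nonneg A_nonneg)

lemma Pm_colsum: "j < I \<Longrightarrow> (\<Sum>i<I. Pm A I k t i j) = 1"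
proof (induction t)
  case 0 then show ?case by simp
next
  case (Suc t)
  have "(\<Sum>i<I. Pm A I k (Suc t) i j) = (\<Sum>l<I. (\<Sum>i<I. A (k + t) i l) * Pm A I k t l j)"
    by (simp add: sum_distrib_right) (rule sum.swap)
  also have "\<dots> = (\<Sum>l<I. Pm A I k t l j)" using A_colstoch by simp
  finally show ?case using Suc by simp
qed

definition Pos :: "nat \<Rightarrow> nat \<Rightarrow> nat \<Rightarrow> nat set" where
  "Pos k j t = {i. i < I \<and> Pm A I k t i j \<ge> \<kappa> ^ t}"

lemma Pos_sub: "Pos k j t \<subseteq> {..<I}" unfolding Pos_def by auto

lemma Pos_step:
  assumes j: "j < I" and l: "l \<in> Pos k j t" and i: "i < I" and e: "l = i \<or> (l, i) \<in> E (k + t)"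
  shows "i \<in> Pos k j (Suc t)"
proof -
  have l': "l < I" "Pm A I k t l j \<ge> \<kappa> ^ t" using l unfolding Pos_def by auto
  have Al: "A (k + t) i l \<ge> \<kappa>" using e A_diag A_edge i l'(1) by auto
  have "\<kappa> ^ Suc t = \<kappa> * \<kappa> ^ t" by simp
  also have "\<dots> \<le> A (k + t) i l * Pm A I k t l j"
    using Al l'(2) \<kappa>_pos by (intro mult_mono) auto
  also have "\<dots> \<le> (\<Sum>l<I. A (k + t) i l * Pm A I k t l j)"
    using l'(1) by (intro member_le_sum) (auto intro!: mult_nonneg_nonneg A_nonneg Pm_nonneg i j)
  finally show ?thesis using i unfolding Pos_def by simp
qed

lemma Pos_mono: "j < I \<Longrightarrow> Pos k j t \<subseteq> Pos k j (t + m)"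
proof (induction m)
  case 0 then show ?case by simp
next
  case (Suc m)
  have "Pos k j (t + m) \<subseteq> Pos k j (Suc (t + m))"
    using Pos_step[OF Suc.prems] Pos_sub by blast
  then show ?case using Suc by auto
qed

lemma Pos_j: "j < I \<Longrightarrow> j \<in> Pos k j t"
  using Pos_mono[of j k 0 t] by (auto simp: Pos_def)

lemma Pos_grow:
  assumes j: "j < I" and nf: "Pos k j t \<noteq> {..<I}"
  shows "Pos k j t \<subset> Pos k j (t + B)"
proof -
  obtain i0 where i0: "i0 < I" "i0 \<notin> Pos k j t" using nf Pos_sub by blast
  have "(j, i0) \<in> ((\<Union>s\<in>{k+t..<k+t+B}. E s) \<inter> ({..<I} \<times> {..<I}))\<^sup>*"
    using B_conn[of "k+t"] j i0 unfolding strongly_connected_on_def by blast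
  from leave_set[OF this Pos_j[OF j] i0(2)]
  obtain u v where uv: "(u, v) \<in> (\<Union>s\<in>{k+t..<k+t+B}. E s)" "u < I" "v < I" "u \<in> Pos k j t" "v \<notin> Pos k j t"
    by blast
  then obtain s where s: "s \<in> {k+t..<k+t+B}" "(u, v) \<in> E s" by blast
  define r where "r = s - k - t"
  have r: "r < B" "s = k + (t + r)" using s unfolding r_def by auto
  have "u \<in> Pos k j (t + r)" using Pos_mono[OF j] uv by blast
  then have "v \<in> Pos k j (Suc (t + r))" using Pos_step[OF j _ uv(3)] s r by auto
  moreover have "Pos k j (Suc (t + r)) \<subseteq> Pos k j (t + B)"
    using Pos_mono[OF j, of k "Suc (t + r)" "B - Suc r"] r by simp
  ultimately have "v \<in> Pos k j (t + B)" by blast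
  then show ?thesis using uv(5) Pos_mono[OF j, of k t B] by blast
qed

lemma Pos_card: "j < I \<Longrightarrow> Pos k j (m * B) = {..<I} \<or> card (Pos k j (m * B)) \<ge> m + 1"
proof (induction m)
  case 0
  then show ?case using Pos_j[OF 0] by (auto simp: Suc_le_eq card_gt_0_iff intro: finite_subset[OF Pos_sub])
next
  case (Suc m)
  have eq: "Suc m * B = m * B + B" by simp
  show ?case
  proof (cases "Pos k j (m * B) = {..<I}")
    case True
    then have "{..<I} \<subseteq> Pos k j (Suc m * B)" using Pos_mono[OF Suc.prems, of k "m * B" B] eq by (simp add: add.commute)
    then show ?thesis using Pos_sub by blast
  next
    case False
    then have "card (Pos k j (m * B)) < card (Pos k j (Suc m * B))"
      using Pos_grow[OF Suc.prems False] eq psubset_card_mono[OF finite_subset[OF Pos_sub]]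
      by (metis finite_lessThan)
    then show ?thesis using Suc False by simp
  qed
qed

lemma Pm_pos:
  assumes i: "i < I" and j: "j < I"
  shows "Pm A I k (I * B) i j \<ge> \<kappa> ^ (I * B)"
proof -
  have "Pos k j (I * B) = {..<I}"
  proof (rule ccontr)
    assume "Pos k j (I * B) \<noteq> {..<I}"
    then have "card (Pos k j (I * B)) \<ge> I + 1" using Pos_card[OF j, of k I] by simp
    moreover have "card (Pos k j (I * B)) \<le> I" using card_mono[OF _ Pos_sub] by simp
    ultimately show False by simp
  qed
  then show ?thesis using i unfolding Pos_def by auto
qed

end



lemma conv_bound:
  fixes R e :: "nat \<Rightarrow> real" and \<mu> lam :: real and N :: nat
  assumes mu: "0 < \<mu>" "\<mu> \<le> 1" and lam: "lam \<le> \<mu> ^ N" and Npos: "0 < N"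
    and Rnn: "\<And>k. 0 \<le> R k" and enn: "\<And>k. 0 \<le> e k"
    and step1: "\<And>k. R (Suc k) \<le> R k + e k"
    and stepN: "\<And>k. R (k + N) \<le> lam * R k + (\<Sum>s<N. e (k + s))"
  shows "R k \<le> (\<mu> ^ k * R 0 + (\<Sum>s<k. \<mu> ^ (k - 1 - s) * e s)) / \<mu> ^ N"
proof (induction k rule: less_induct)
  case (less k)
  have muN: "0 < \<mu> ^ N" using mu by simp
  show ?case
  proof (cases "k < N")
    case True
    have small: "R m \<le> R 0 + (\<Sum>s<m. e s)" for m
      by (induction m) (auto intro: order.trans[OF step1])
    have p1: "R 0 \<le> \<mu> ^ k * R 0 / \<mu> ^ N"
    proof -
      have "\<mu> ^ N \<le> \<mu> ^ k" using True mu by (intro power_decreasing) auto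
      then have "\<mu> ^ N * R 0 \<le> \<mu> ^ k * R 0" using Rnn by (intro mult_right_mono) auto
      then show ?thesis using muN by (simp add: le_divide_eq mult.commute)
    qed
    have p2: "e s \<le> \<mu> ^ (k - 1 - s) * e s / \<mu> ^ N" if "s < k" for s
    proof -
      have "\<mu> ^ N \<le> \<mu> ^ (k - 1 - s)" using True mu that by (intro power_decreasing) auto
      then have "\<mu> ^ N * e s \<le> \<mu> ^ (k - 1 - s) * e s" using enn by (intro mult_right_mono) auto
      then show ?thesis using muN by (simp add: le_divide_eq mult.commute)
    qed
    have "R k \<le> R 0 + (\<Sum>s<k. e s)" by (rule small)
    also have "\<dots> \<le> \<mu> ^ k * R 0 / \<mu> ^ N + (\<Sum>s<k. \<mu> ^ (k - 1 - s) * e s / \<mu> ^ N)"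
      using p1 p2 by (intro add_mono sum_mono) auto
    finally show ?thesis by (simp add: add_divide_distrib sum_divide_distrib)
  next
    case False
    define m where "m = k - N"
    have k: "k = m + N" using False unfolding m_def by simp
    have IH: "R m \<le> (\<mu> ^ m * R 0 + (\<Sum>s<m. \<mu> ^ (m - 1 - s) * e s)) / \<mu> ^ N"
      using less Npos k by simp
    have "R k \<le> lam * R m + (\<Sum>s<N. e (m + s))" using stepN[of m] k by simp
    also have "\<dots> \<le> \<mu> ^ N * R m + (\<Sum>s<N. e (m + s))"
      using lam Rnn by (intro add_mono mult_right_mono) auto
    also have "\<mu> ^ N * R m \<le> \<mu> ^ m * R 0 + (\<Sum>s<m. \<mu> ^ (m - 1 - s) * e s)"
      using IH muN by (simp add: le_divide_eq mult.commute)
    also have "\<mu> ^ m * R 0 = \<mu> ^ k * R 0 / \<mu> ^ N" using k muN mu by (simp add: power_add)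
    also have "(\<Sum>s<m. \<mu> ^ (m - 1 - s) * e s) = (\<Sum>s<m. \<mu> ^ (k - 1 - s) * e s / \<mu> ^ N)"
    proof (rule sum.cong)
      fix s assume "s \<in> {..<m}"
      then have "k - 1 - s = (m - 1 - s) + N" using k by auto
      then show "\<mu> ^ (m - 1 - s) * e s = \<mu> ^ (k - 1 - s) * e s / \<mu> ^ N"
        using muN mu by (simp add: power_add)
    qed simp
    also have "(\<Sum>s<N. e (m + s)) \<le> (\<Sum>s<N. \<mu> ^ (k - 1 - (m + s)) * e (m + s) / \<mu> ^ N)"
    proof (rule sum_mono)
      fix s assume s: "s \<in> {..<N}"
      have "\<mu> ^ N \<le> \<mu> ^ (k - 1 - (m + s))" using s mu k by (intro power_decreasing) auto
      then have "\<mu> ^ N * e (m + s) \<le> \<mu> ^ (k - 1 - (m + s)) * e (m + s)" using enn by (intro mult_right_mono) auto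
      then show "e (m + s) \<le> \<mu> ^ (k - 1 - (m + s)) * e (m + s) / \<mu> ^ N"
        using muN by (simp add: le_divide_eq mult.commute)
    qed
    also have "(\<Sum>s<N. \<mu> ^ (k - 1 - (m + s)) * e (m + s) / \<mu> ^ N) = (\<Sum>s\<in>{m..<k}. \<mu> ^ (k - 1 - s) * e s / \<mu> ^ N)"
    proof -
      have "(\<Sum>s\<in>{0+m..<N+m}. \<mu> ^ (k - 1 - s) * e s / \<mu> ^ N) = (\<Sum>s\<in>{0..<N}. \<mu> ^ (k - 1 - (s + m)) * e (s + m) / \<mu> ^ N)"
        by (rule sum.shift_bounds_nat_ivl)
      then show ?thesis using k by (simp add: lessThan_atLeast0 add.commute)
    qed
    finally have "R k \<le> \<mu> ^ k * R 0 / \<mu> ^ N + ((\<Sum>s<m. \<mu> ^ (k - 1 - s) * e s / \<mu> ^ N) + (\<Sum>s\<in>{m..<k}. \<mu> ^ (k - 1 - s) * e s / \<mu> ^ N))"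
      by simp
    also have "(\<Sum>s<m. \<mu> ^ (k - 1 - s) * e s / \<mu> ^ N) + (\<Sum>s\<in>{m..<k}. \<mu> ^ (k - 1 - s) * e s / \<mu> ^ N)
        = (\<Sum>s<k. \<mu> ^ (k - 1 - s) * e s / \<mu> ^ N)"
      using k by (simp add: lessThan_atLeast0 sum.atLeastLessThan_concat)
    finally show ?thesis by (simp add: add_divide_distrib sum_divide_distrib)
  qed
qed




lemma sum_norm_mix:
  fixes v :: "nat \<Rightarrow> 'a::real_normed_vector"
  assumes nn: "\<And>i j. i < I \<Longrightarrow> j < I \<Longrightarrow> 0 \<le> M i j"
    and cs: "\<And>j. j < I \<Longrightarrow> (\<Sum>i<I. M i j) \<le> c"
  shows "(\<Sum>i<I. norm (\<Sum>j<I. M i j *\<^sub>R v j)) \<le> c * (\<Sum>j<I. norm (v j))"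
proof -
  have "(\<Sum>i<I. norm (\<Sum>j<I. M i j *\<^sub>R v j)) \<le> (\<Sum>i<I. \<Sum>j<I. M i j * norm (v j))"
    by (intro sum_mono order.trans[OF norm_sum]) (simp add: nn)
  also have "\<dots> = (\<Sum>j<I. (\<Sum>i<I. M i j) * norm (v j))"
    by (subst sum.swap) (simp add: sum_distrib_right)
  also have "\<dots> \<le> (\<Sum>j<I. c * norm (v j))"
    by (intro sum_mono mult_right_mono cs) auto
  finally show ?thesis by (simp add: sum_distrib_left)
qed

context mixing
begin

lemma phi_facts:
  assumes phi0: "\<And>i. i < I \<Longrightarrow> \<phi> 0 i = 1"
    and phi_upd: "\<And>k i. i < I \<Longrightarrow> \<phi> (Suc k) i = (\<Sum>j<I. A k i j * \<phi> k j)"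
  shows "(\<Sum>i<I. \<phi> k i) = real I" and "\<And>i. i < I \<Longrightarrow> \<phi> k i \<ge> \<kappa> ^ k"
proof -
  show "(\<Sum>i<I. \<phi> k i) = real I"
  proof (induction k)
    case 0 then show ?case using phi0 by simp
  next
    case (Suc k)
    have "(\<Sum>i<I. \<phi> (Suc k) i) = (\<Sum>j<I. (\<Sum>i<I. A k i j) * \<phi> k j)"
      using phi_upd by (simp add: sum_distrib_right) (rule sum.swap)
    then show ?case using Suc A_colstoch by simp
  qed
next
  fix i assume i: "i < I"
  show "\<phi> k i \<ge> \<kappa> ^ k"
    using i
  proof (induction k arbitrary: i)
    case 0 then show ?case using phi0 by simp
  next
    case (Suc k)
    have nn: "\<phi> k j \<ge> 0" if "j < I" for j
      using Suc.IH[OF that] \<kappa>_pos by (meson order.trans zero_le_power less_imp_le)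
    have "\<kappa> ^ Suc k = \<kappa> * \<kappa> ^ k" by simp
    also have "\<dots> \<le> A k i i * \<phi> k i" using Suc A_diag \<kappa>_pos A_nonneg by (intro mult_mono) auto
    also have "\<dots> \<le> (\<Sum>j<I. A k i j * \<phi> k j)"
      using Suc.prems by (intro member_le_sum) (auto intro!: mult_nonneg_nonneg A_nonneg nn)
    finally show ?case using phi_upd Suc.prems by simp
  qed
qed

end



context mixing
begin

lemma pushsum:
  fixes u ep :: "nat \<Rightarrow> nat \<Rightarrow> 'a::real_normed_vector"
  assumes phi0: "\<And>i. i < I \<Longrightarrow> \<phi> 0 i = 1"
    and phi_upd: "\<And>k i. i < I \<Longrightarrow> \<phi> (Suc k) i = (\<Sum>j<I. A k i j * \<phi> k j)"
    and u_upd: "\<And>k i. i < I \<Longrightarrow> u (Suc k) i = (\<Sum>j<I. A k i j *\<^sub>R u k j) + ep k i"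
  defines "rr \<equiv> \<lambda>k i. u k i - (\<phi> k i / real I) *\<^sub>R (\<Sum>j<I. u k j)"
  shows "(\<Sum>i<I. norm (rr (Suc k) i)) \<le> (\<Sum>i<I. norm (rr k i)) + 2 * (\<Sum>i<I. norm (ep k i))"
    and "(\<Sum>i<I. norm (rr (k + I * B) i)) \<le> (1 - real I * \<kappa> ^ (I * B)) * (\<Sum>i<I. norm (rr k i))
           + (\<Sum>s<I * B. 2 * (\<Sum>i<I. norm (ep (k + s) i)))"
proof -
  note phisum = phi_facts(1)[OF phi0 phi_upd]
  have phinn: "\<phi> k i \<ge> 0" if "i < I" for k i
    using phi_facts(2)[OF phi0 phi_upd that, of k] \<kappa>_pos by (meson order.trans zero_le_power less_imp_le)
  have Ipos: "real I > 0" using I_pos by simp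
  define err where "err = (\<lambda>k i. ep k i - (\<phi> (Suc k) i / real I) *\<^sub>R (\<Sum>j<I. ep k j))"
  have usum: "(\<Sum>j<I. u (Suc k) j) = (\<Sum>j<I. u k j) + (\<Sum>j<I. ep k j)" for k
  proof -
    have "(\<Sum>j<I. u (Suc k) j) = (\<Sum>i<I. \<Sum>j<I. A k i j *\<^sub>R u k j) + (\<Sum>j<I. ep k j)"
      using u_upd by (simp add: sum.distrib)
    also have "(\<Sum>i<I. \<Sum>j<I. A k i j *\<^sub>R u k j) = (\<Sum>j<I. (\<Sum>i<I. A k i j) *\<^sub>R u k j)"
      by (subst sum.swap) (simp add: scaleR_sum_left)
    also have "\<dots> = (\<Sum>j<I. u k j)" using A_colstoch by simp
    finally show ?thesis .
  qed
  have rr_step: "rr (Suc k) i = (\<Sum>j<I. A k i j *\<^sub>R rr k j) + err k i" if i: "i < I" for k i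
  proof -
    have "(\<Sum>j<I. A k i j *\<^sub>R rr k j) = (\<Sum>j<I. A k i j *\<^sub>R u k j) - (\<Sum>j<I. (A k i j * \<phi> k j / real I) *\<^sub>R (\<Sum>j<I. u k j))"
      unfolding rr_def by (simp add: scaleR_diff_right sum_subtractf)
    also have "(\<Sum>j<I. (A k i j * \<phi> k j / real I) *\<^sub>R (\<Sum>j<I. u k j)) = (\<phi> (Suc k) i / real I) *\<^sub>R (\<Sum>j<I. u k j)"
      using phi_upd[OF i] by (simp add: scaleR_sum_left[symmetric] sum_divide_distrib)
    finally have "(\<Sum>j<I. A k i j *\<^sub>R rr k j) = (\<Sum>j<I. A k i j *\<^sub>R u k j) - (\<phi> (Suc k) i / real I) *\<^sub>R (\<Sum>j<I. u k j)" .
    then show ?thesis unfolding rr_def err_def using u_upd[OF i] usum[of k]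
      by (simp add: scaleR_add_right algebra_simps)
  qed
  have err_bd: "(\<Sum>i<I. norm (err k i)) \<le> 2 * (\<Sum>i<I. norm (ep k i))" for k
  proof -
    have "(\<Sum>i<I. norm (err k i)) \<le> (\<Sum>i<I. norm (ep k i) + (\<phi> (Suc k) i / real I) * norm (\<Sum>j<I. ep k j))"
    proof (rule sum_mono)
      fix i assume i: "i \<in> {..<I}"
      have "norm (err k i) \<le> norm (ep k i) + norm ((\<phi> (Suc k) i / real I) *\<^sub>R (\<Sum>j<I. ep k j))"
        unfolding err_def by (rule norm_triangle_ineq4)
      then show "norm (err k i) \<le> norm (ep k i) + (\<phi> (Suc k) i / real I) * norm (\<Sum>j<I. ep k j)"
        using phinn[of i "Suc k"] i by simp
    qed
    also have "\<dots> = (\<Sum>i<I. norm (ep k i)) + ((\<Sum>i<I. \<phi> (Suc k) i) / real I) * norm (\<Sum>j<I. ep k j)"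
      by (simp add: sum.distrib sum_distrib_right sum_divide_distrib)
    also have "\<dots> = (\<Sum>i<I. norm (ep k i)) + norm (\<Sum>j<I. ep k j)" using phisum Ipos by simp
    also have "\<dots> \<le> 2 * (\<Sum>i<I. norm (ep k i))" using norm_sum[of "ep k" "{..<I}"] by simp
    finally show ?thesis .
  qed
  have mixA: "(\<Sum>i<I. norm (\<Sum>j<I. A k i j *\<^sub>R v j)) \<le> (\<Sum>j<I. norm (v j))" for k and v :: "nat \<Rightarrow> 'a"
    using sum_norm_mix[of I "A k" 1 v] A_nonneg A_colstoch by simp
  show "(\<Sum>i<I. norm (rr (Suc k) i)) \<le> (\<Sum>i<I. norm (rr k i)) + 2 * (\<Sum>i<I. norm (ep k i))"
  proof -
    have "(\<Sum>i<I. norm (rr (Suc k) i)) \<le> (\<Sum>i<I. norm (\<Sum>j<I. A k i j *\<^sub>R rr k j) + norm (err k i))"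
      using rr_step by (intro sum_mono) (simp add: norm_triangle_ineq)
    also have "\<dots> \<le> (\<Sum>i<I. norm (rr k i)) + 2 * (\<Sum>i<I. norm (ep k i))"
      using mixA[of k "rr k"] err_bd[of k] by (simp add: sum.distrib)
    finally show ?thesis .
  qed
  define hh where "hh = (\<lambda>t i. \<Sum>j<I. Pm A I k t i j *\<^sub>R rr k j)"
  have hh_step: "hh (Suc t) i = (\<Sum>l<I. A (k + t) i l *\<^sub>R hh t l)" for t i
  proof -
    have "hh (Suc t) i = (\<Sum>j<I. \<Sum>l<I. (A (k + t) i l * Pm A I k t l j) *\<^sub>R rr k j)"
      unfolding hh_def by (simp add: scaleR_sum_left)
    also have "\<dots> = (\<Sum>l<I. \<Sum>j<I. A (k + t) i l *\<^sub>R (Pm A I k t l j *\<^sub>R rr k j))"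
      by (subst sum.swap) simp
    finally show ?thesis unfolding hh_def by (simp add: scaleR_sum_right)
  qed
  have hh0: "hh 0 i = rr k i" if "i < I" for i
  proof -
    have "hh 0 i = (\<Sum>j<I. (if i = j then rr k j else 0))"
      unfolding hh_def by (intro sum.cong) auto
    then show ?thesis using that by (simp add: sum.delta)
  qed
  have dev: "(\<Sum>i<I. norm (rr (k + t) i - hh t i)) \<le> (\<Sum>s<t. 2 * (\<Sum>i<I. norm (ep (k + s) i)))" for t
  proof (induction t)
    case 0 then show ?case using hh0 by simp
  next
    case (Suc t)
    have eq: "rr (k + Suc t) i - hh (Suc t) i = (\<Sum>l<I. A (k + t) i l *\<^sub>R (rr (k + t) l - hh t l)) + err (k + t) i"
      if "i < I" for i
      using rr_step[OF that, of "k + t"] hh_step[of t i]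
      by (simp add: scaleR_diff_right sum_subtractf)
    have "(\<Sum>i<I. norm (rr (k + Suc t) i - hh (Suc t) i))
       \<le> (\<Sum>i<I. norm (\<Sum>l<I. A (k + t) i l *\<^sub>R (rr (k + t) l - hh t l)) + norm (err (k + t) i))"
      using eq by (intro sum_mono) (simp add: norm_triangle_ineq)
    also have "\<dots> \<le> (\<Sum>i<I. norm (rr (k + t) i - hh t i)) + 2 * (\<Sum>i<I. norm (ep (k + t) i))"
      using mixA[of "k + t" "\<lambda>l. rr (k + t) l - hh t l"] err_bd[of "k + t"] by (simp add: sum.distrib)
    finally show ?case using Suc by simp
  qed
  define N where "N = I * B"
  define \<delta> where "\<delta> = \<kappa> ^ N"
  have rrsum: "(\<Sum>j<I. rr k j) = 0"
    unfolding rr_def using Ipos by (simp add: sum_subtractf scaleR_sum_left[symmetric] sum_divide_distrib[symmetric] phisum)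
  have hhN: "hh N i = (\<Sum>j<I. (Pm A I k N i j - \<delta>) *\<^sub>R rr k j)" for i
    unfolding hh_def using rrsum by (simp add: scaleR_diff_left sum_subtractf scaleR_sum_right[symmetric])
  have contr: "(\<Sum>i<I. norm (hh N i)) \<le> (1 - real I * \<delta>) * (\<Sum>j<I. norm (rr k j))"
    unfolding hhN
  proof (rule sum_norm_mix)
    fix i j assume "i < I" "j < I"
    then show "0 \<le> Pm A I k N i j - \<delta>" using Pm_pos unfolding N_def \<delta>_def by simp
  next
    fix j assume "j < I"
    then show "(\<Sum>i<I. Pm A I k N i j - \<delta>) \<le> 1 - real I * \<delta>"
      by (simp add: sum_subtractf Pm_colsum)
  qed
  have "(\<Sum>i<I. norm (rr (k + N) i)) \<le> (\<Sum>i<I. norm (hh N i) + norm (rr (k + N) i - hh N i))"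
    by (intro sum_mono) (metis add.commute diff_add_cancel norm_triangle_ineq)
  also have "\<dots> \<le> (1 - real I * \<delta>) * (\<Sum>j<I. norm (rr k j)) + (\<Sum>s<N. 2 * (\<Sum>i<I. norm (ep (k + s) i)))"
    using contr dev[of N] by (simp add: sum.distrib)
  finally show "(\<Sum>i<I. norm (rr (k + I * B) i)) \<le> (1 - real I * \<kappa> ^ (I * B)) * (\<Sum>i<I. norm (rr k i))
           + (\<Sum>s<I * B. 2 * (\<Sum>i<I. norm (ep (k + s) i)))" unfolding N_def \<delta>_def .
qed

end



definition cv :: "real \<Rightarrow> (nat \<Rightarrow> real) \<Rightarrow> nat \<Rightarrow> real" where
  "cv \<mu> e k = (\<Sum>s<k. \<mu> ^ (k - Suc s) * e s)"

lemma geom_le: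
  fixes \<mu> :: real assumes "0 \<le> \<mu>" "\<mu> < 1"
  shows "(\<Sum>s<k. \<mu> ^ (k - Suc s)) \<le> 1 / (1 - \<mu>)"
proof -
  have "(\<Sum>s<k. \<mu> ^ (k - Suc s)) = (\<Sum>i<k. \<mu> ^ i)" by (rule sum.nat_diff_reindex)
  also have "\<dots> = (1 - \<mu> ^ k) / (1 - \<mu>)" using assms sum_gp_strict[of \<mu> k] by simp
  also have "\<dots> \<le> 1 / (1 - \<mu>)" using assms by (intro divide_right_mono) auto
  finally show ?thesis .
qed

lemma cv_nonneg: "0 \<le> \<mu> \<Longrightarrow> (\<And>s. 0 \<le> e s) \<Longrightarrow> 0 \<le> cv \<mu> e k"
  unfolding cv_def by (intro sum_nonneg mult_nonneg_nonneg) auto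

lemma cv_bdd:
  fixes \<mu> :: real assumes "0 \<le> \<mu>" "\<mu> < 1" and "\<And>s. s < k \<Longrightarrow> e s \<le> M" and "0 \<le> M"
  shows "cv \<mu> e k \<le> M / (1 - \<mu>)"
proof -
  have "cv \<mu> e k \<le> (\<Sum>s<k. \<mu> ^ (k - Suc s) * M)"
    unfolding cv_def using assms by (intro sum_mono mult_left_mono) auto
  also have "\<dots> = M * (\<Sum>s<k. \<mu> ^ (k - Suc s))" by (simp add: sum_distrib_left mult.commute)
  also have "\<dots> \<le> M * (1 / (1 - \<mu>))" using geom_le[OF assms(1,2)] assms(4) by (intro mult_left_mono) auto
  finally show ?thesis by simp
qed

lemma cv_mono: "0 \<le> \<mu> \<Longrightarrow> (\<And>s. e s \<le> f s) \<Longrightarrow> cv \<mu> e k \<le> cv \<mu> f k"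
  unfolding cv_def by (intro sum_mono mult_left_mono) auto

lemma cv_add: "cv \<mu> (\<lambda>s. e s + f s) k = cv \<mu> e k + cv \<mu> f k"
  unfolding cv_def by (simp add: distrib_left sum.distrib)

lemma cv_cmult: "cv \<mu> (\<lambda>s. c * e s) k = c * cv \<mu> e k"
  unfolding cv_def by (simp add: sum_distrib_left algebra_simps)

lemma cv_summable:
  fixes \<mu> :: real assumes "0 \<le> \<mu>" "\<mu> < 1" and f: "\<And>s. 0 \<le> f s" "summable f"
  shows "summable (cv \<mu> f)"
proof -
  have "summable (\<lambda>k. \<Sum>i\<le>k. f i * \<mu> ^ (k - i))"
    by (rule summable_Cauchy_product) (use assms in \<open>auto simp: summable_geometric\<close>)
  moreover have "cv \<mu> f (Suc k) = (\<Sum>i\<le>k. f i * \<mu> ^ (k - i))" for k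
    unfolding cv_def lessThan_Suc_atMost[symmetric] by (simp add: mult.commute)
  ultimately have "summable (\<lambda>k. cv \<mu> f (Suc k))" by simp
  then show ?thesis by (simp add: summable_Suc_iff)
qed

lemma cv_sq_summable:
  fixes \<mu> :: real assumes mu: "0 \<le> \<mu>" "\<mu> < 1" and e: "\<And>s. 0 \<le> e s" "summable (\<lambda>s. (e s)\<^sup>2)"
  shows "summable (\<lambda>k. (cv \<mu> e k)\<^sup>2)"
proof -
  have b: "(cv \<mu> e k)\<^sup>2 \<le> (1 / (1 - \<mu>)) * cv \<mu> (\<lambda>s. (e s)\<^sup>2) k" for k
  proof -
    have "(cv \<mu> e k)\<^sup>2 = (\<Sum>s<k. sqrt (\<mu> ^ (k - Suc s)) * (sqrt (\<mu> ^ (k - Suc s)) * e s))\<^sup>2"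
      unfolding cv_def using mu by (simp add: mult.assoc[symmetric])
    also have "\<dots> \<le> (\<Sum>s<k. (sqrt (\<mu> ^ (k - Suc s)))\<^sup>2) * (\<Sum>s<k. (sqrt (\<mu> ^ (k - Suc s)) * e s)\<^sup>2)"
      by (rule Cauchy_Schwarz_ineq_sum)
    also have "\<dots> = (\<Sum>s<k. \<mu> ^ (k - Suc s)) * cv \<mu> (\<lambda>s. (e s)\<^sup>2) k"
      unfolding cv_def using mu by (simp add: power_mult_distrib)
    also have "\<dots> \<le> (1 / (1 - \<mu>)) * cv \<mu> (\<lambda>s. (e s)\<^sup>2) k"
      by (intro mult_right_mono geom_le mu cv_nonneg) auto
    finally show ?thesis .
  qed
  have "summable (\<lambda>k. (1 / (1 - \<mu>)) * cv \<mu> (\<lambda>s. (e s)\<^sup>2) k)"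
    by (intro summable_mult cv_summable mu e) auto
  then show ?thesis by (rule summable_comparison_test'[where N=0]) (use b in auto)
qed

lemma sq_summable_add:
  fixes f g :: "nat \<Rightarrow> real"
  assumes "summable (\<lambda>k. (f k)\<^sup>2)" "summable (\<lambda>k. (g k)\<^sup>2)"
  shows "summable (\<lambda>k. (f k + g k)\<^sup>2)"
proof -
  have b: "(f k + g k)\<^sup>2 \<le> 2 * (f k)\<^sup>2 + 2 * (g k)\<^sup>2" for k
  proof -
    have "0 \<le> (f k - g k)\<^sup>2" by simp
    then show ?thesis by (simp add: power2_diff power2_sum)
  qed
  have s: "summable (\<lambda>k. 2 * (f k)\<^sup>2 + 2 * (g k)\<^sup>2)"
    using assms by (intro summable_add summable_mult)
  show ?thesis
    by (rule summable_comparison_test'[where N=0, OF s]) (use b in simp)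
qed

lemma sq_summable_mono:
  fixes f g :: "nat \<Rightarrow> real"
  assumes s: "summable (\<lambda>k. (g k)\<^sup>2)" and "\<And>k. 0 \<le> f k" "\<And>k. f k \<le> g k"
  shows "summable (\<lambda>k. (f k)\<^sup>2)"
proof (rule summable_comparison_test'[where N=0, OF s])
  fix n show "norm ((f n)\<^sup>2) \<le> (g n)\<^sup>2" using assms(2,3)[of n] by (simp add: power_mono)
qed

lemma sq_summable_cmult:
  fixes f :: "nat \<Rightarrow> real"
  assumes "summable (\<lambda>k. (f k)\<^sup>2)"
  shows "summable (\<lambda>k. (c * f k)\<^sup>2)"
  using summable_mult[OF assms, of "c\<^sup>2"] by (simp add: power_mult_distrib)

lemma prod_summable:
  fixes f g :: "nat \<Rightarrow> real"
  assumes "summable (\<lambda>k. (f k)\<^sup>2)" "summable (\<lambda>k. (g k)\<^sup>2)" "\<And>k. 0 \<le> f k" "\<And>k. 0 \<le> g k"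
  shows "summable (\<lambda>k. f k * g k)"
proof -
  have b: "f k * g k \<le> ((f k)\<^sup>2 + (g k)\<^sup>2) / 2" for k
  proof -
    have "0 \<le> (f k - g k)\<^sup>2" by simp
    then show ?thesis by (simp add: power2_diff)
  qed
  have s: "summable (\<lambda>k. ((f k)\<^sup>2 + (g k)\<^sup>2) / 2)"
    using assms by (intro summable_add summable_divide)
  show ?thesis
    by (rule summable_comparison_test'[where N=0, OF s]) (use b assms(3,4) in simp)
qed

lemma geo_sq_summable:
  fixes \<mu> :: real assumes "0 \<le> \<mu>" "\<mu> < 1"
  shows "summable (\<lambda>k. (c * \<mu> ^ k)\<^sup>2)"
proof -
  have "summable (\<lambda>k. c\<^sup>2 * (\<mu>\<^sup>2) ^ k)"
    using assms by (intro summable_mult summable_geometric) (simp add: abs_square_less_1)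
  moreover have "(c * \<mu> ^ k)\<^sup>2 = c\<^sup>2 * (\<mu>\<^sup>2) ^ k" for k
    by (simp add: power_mult_distrib power_mult[symmetric] mult.commute[of k])
  ultimately show ?thesis by simp
qed




lemma dbound:
  fixes F G :: "'a::euclidean_space \<Rightarrow> real"
  assumes sc: "strongly_convex_on \<tau> X F" and tau: "0 < \<tau>" and x: "x \<in> X" and xt: "xt \<in> X" and XD: "X \<subseteq> Dom"
    and dF: "(F has_derivative (\<lambda>h. inner gx h)) (at x)"
    and mn: "F xt + inner c (xt - x) + G xt \<le> F x + inner c (x - x) + G x"
    and sg: "is_subgradient Dom G x g" and ng: "norm g \<le> LG"
  shows "norm (xt - x) \<le> 2 * (norm (gx + c) + LG) / \<tau>"
proof -
  have f1: "F xt \<ge> F x + inner gx (xt - x) + \<tau> / 2 * (norm (xt - x))\<^sup>2"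
    by (rule sc_first_order[OF sc x xt dF])
  have g1: "G xt \<ge> G x + inner g (xt - x)" using sg xt XD unfolding is_subgradient_def by auto
  have "\<tau> / 2 * (norm (xt - x))\<^sup>2 \<le> - inner (gx + c + g) (xt - x)"
    using f1 g1 mn by (simp add: inner_add_left)
  also have "\<dots> \<le> norm (gx + c + g) * norm (xt - x)"
    using norm_cauchy_schwarz[of "-(gx + c + g)" "xt - x"] by (simp only: inner_minus_left norm_minus_cancel)
  also have "\<dots> \<le> (norm (gx + c) + LG) * norm (xt - x)"
    using ng norm_triangle_ineq[of "gx + c" g] by (intro mult_right_mono) auto
  finally have h: "\<tau> / 2 * (norm (xt - x))\<^sup>2 \<le> (norm (gx + c) + LG) * norm (xt - x)" .
  show ?thesis
  proof (cases "norm (xt - x) = 0")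
    case True
    have "0 \<le> norm (gx + c) + LG" using ng norm_ge_zero[of g] norm_ge_zero[of "gx + c"] by linarith
    then show ?thesis using True tau by simp
  next
    case False
    then have np: "norm (xt - x) > 0" by simp
    have "\<tau> / 2 * norm (xt - x) \<le> norm (gx + c) + LG"
      using h np by (simp add: power2_eq_square)
    then show ?thesis using tau by (simp add: field_simps)
  qed
qed




lemma eps_helper:
  fixes eps q X :: real
  assumes "eps * q \<le> 1" "0 < q" "0 \<le> X"
  shows "eps * X \<le> X / q"
proof -
  have "(eps * q) * X \<le> 1 * X" using assms by (intro mult_right_mono) auto
  then have "(eps * X) * q \<le> X" by (simp add: algebra_simps)
  then show ?thesis using assms by (simp add: le_divide_eq)
qed

lemma small_gain:
  fixes \<alpha> \<beta> v eps BD BE :: real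
  assumes "0 \<le> \<alpha>" "0 \<le> \<beta>" "0 \<le> v" "0 \<le> eps" "eps * (4 * (1 + v)) \<le> 1"
    and BD: "BD = 4 * (\<alpha> + \<beta>)" and BE: "BE = 2 * \<beta> + 2 * (v + 1) * BD"
  shows "\<alpha> + eps * (BE + BD) \<le> BD" and "\<beta> + v * BD + eps * (BE + BD) \<le> BE"
proof -
  have BDn: "0 \<le> BD" using assms by simp
  have q: "0 < 4 * (1 + v)" using assms by simp
  have e1: "eps * (2 * \<beta>) \<le> \<beta> / 2"
  proof -
    have "eps * (2 * \<beta>) \<le> (2 * \<beta>) / (4 * (1 + v))" using eps_helper[OF assms(5) q] assms by simp
    also have "\<dots> \<le> \<beta> / 2" using assms by (simp add: divide_simps algebra_simps mult_left_mono)
    finally show ?thesis .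
  qed
  have e2: "eps * ((2 * v + 3) * BD) \<le> 3 / 4 * BD"
  proof -
    have "eps * ((2 * v + 3) * BD) \<le> ((2 * v + 3) * BD) / (4 * (1 + v))" using eps_helper[OF assms(5) q] assms BDn by simp
    also have "\<dots> \<le> 3 / 4 * BD" using assms BDn by (simp add: divide_simps algebra_simps mult_left_mono)
    finally show ?thesis .
  qed
  have e3: "eps * (2 * (v + 1) * BD) \<le> BD / 2"
  proof -
    have "eps * (2 * (v + 1) * BD) \<le> (2 * (v + 1) * BD) / (4 * (1 + v))" using eps_helper[OF assms(5) q] assms BDn by simp
    also have "\<dots> = BD / 2" using q by (simp add: divide_simps algebra_simps)
    finally show ?thesis .
  qed
  have e4: "eps * BD \<le> BD / 4"
  proof -
    have "eps * BD \<le> BD / (4 * (1 + v))" using eps_helper[OF assms(5) q] BDn by simp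
    also have "\<dots> \<le> BD / 4" using assms BDn by (intro divide_left_mono) auto
    finally show ?thesis .
  qed
  have s: "eps * (BE + BD) = eps * (2 * \<beta>) + eps * ((2 * v + 3) * BD)" unfolding BE by (simp add: algebra_simps)
  have "eps * (BE + BD) \<le> \<beta> / 2 + 3 / 4 * BD" unfolding s using e1 e2 by (rule add_mono)
  moreover have "\<alpha> + (\<beta> / 2 + 3 / 4 * BD) \<le> BD" using BD assms(1,2) by (simp add: field_simps)
  ultimately show "\<alpha> + eps * (BE + BD) \<le> BD" by linarith
  have s2: "eps * (BE + BD) = eps * (2 * \<beta>) + eps * (2 * (v + 1) * BD) + eps * BD" unfolding BE by (simp add: algebra_simps)
  have "eps * (BE + BD) \<le> \<beta> / 2 + BD / 2 + BD / 4" unfolding s2 using e1 e3 e4 by (intro add_mono)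
  moreover have BE': "BE = 2 * \<beta> + 2 * (v * BD) + 2 * BD" using BE by (simp add: algebra_simps)
  ultimately show "\<beta> + v * BD + eps * (BE + BD) \<le> BE" using BE' BDn assms(2,3) mult_nonneg_nonneg[OF assms(3) BDn] by linarith
qed



theorem mainTheorem19:
  fixes I :: nat
    and X Dom :: "'a::euclidean_space set"
    and f :: "nat \<Rightarrow> 'a \<Rightarrow> real" and gradf :: "nat \<Rightarrow> 'a \<Rightarrow> 'a"
    and L :: "nat \<Rightarrow> real"
    and G :: "'a \<Rightarrow> real"
    and LF LG :: real
    and \<gamma> :: "nat \<Rightarrow> real"
    and E :: "nat \<Rightarrow> (nat \<times> nat) set" and B :: nat
    and A :: "nat \<Rightarrow> nat \<Rightarrow> nat \<Rightarrow> real" and \<kappa> :: real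
    and ft :: "nat \<Rightarrow> 'a \<Rightarrow> 'a \<Rightarrow> real" and gradft :: "nat \<Rightarrow> 'a \<Rightarrow> 'a \<Rightarrow> 'a"
    and \<tau> Lt :: "nat \<Rightarrow> real"
    and x xh xt y :: "nat \<Rightarrow> nat \<Rightarrow> 'a"
    and \<phi> :: "nat \<Rightarrow> nat \<Rightarrow> real"
  assumes I_pos: "0 < I"
    (* problem data *)
    and X_closed: "closed X" and X_convex: "convex X" and X_ne: "X \<noteq> {}"
    and O_open: "open Dom" and X_sub_O: "X \<subseteq> Dom"
    and f_grad: "\<And>i x. i < I \<Longrightarrow> x \<in> Dom \<Longrightarrow> (f i has_derivative (\<lambda>h. inner (gradf i x) h)) (at x)"
    and f_C1: "\<And>i. i < I \<Longrightarrow> continuous_on Dom (gradf i)"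
    and f_Lip: "\<And>i u v. i < I \<Longrightarrow> u \<in> X \<Longrightarrow> v \<in> X \<Longrightarrow> norm (gradf i u - gradf i v) \<le> L i * norm (u - v)"
    and G_convex: "convex_on Dom G"
    and V_bdd: "\<exists>c. \<forall>z\<in>X. c \<le> (\<Sum>i<I. f i z) + G z"
    and gradF_bdd: "\<And>z. z \<in> X \<Longrightarrow> norm (\<Sum>i<I. gradf i z) \<le> LF"
    and subgrad_bdd: "\<And>z g. z \<in> X \<Longrightarrow> is_subgradient Dom G z g \<Longrightarrow> norm g \<le> LG"
    (* step sizes *)
    and \<gamma>_pos: "\<And>k. 0 < \<gamma> k" and \<gamma>_le1: "\<And>k. \<gamma> k \<le> 1"
    and \<gamma>_div: "\<not> summable \<gamma>"
    and \<gamma>_sq: "summable (\<lambda>k. (\<gamma> k)\<^sup>2)"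
    (* network *)
    and B_pos: "0 < B"
    and E_sub: "\<And>k. E k \<subseteq> {..<I} \<times> {..<I}"
    and B_conn: "\<And>k. strongly_connected_on I (\<Union>t\<in>{k..<k+B}. E t)"
    and \<kappa>_pos: "0 < \<kappa>"
    and A_zero: "\<And>k i j. i < I \<Longrightarrow> j < I \<Longrightarrow> j \<noteq> i \<Longrightarrow> (j, i) \<notin> E k \<Longrightarrow> A k i j = 0"
    and A_edge: "\<And>k i j. i < I \<Longrightarrow> j < I \<Longrightarrow> (j, i) \<in> E k \<Longrightarrow> A k i j \<ge> \<kappa>"
    and A_diag: "\<And>k i. i < I \<Longrightarrow> A k i i \<ge> \<kappa>"
    and A_nonneg: "\<And>k i j. i < I \<Longrightarrow> j < I \<Longrightarrow> 0 \<le> A k i j"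
    and A_colstoch: "\<And>k j. j < I \<Longrightarrow> (\<Sum>i<I. A k i j) = 1"
    (* surrogates, Assumption III.14 *)
    and \<tau>_pos: "\<And>i. i < I \<Longrightarrow> 0 < \<tau> i"
    and ft_sconv: "\<And>i w. i < I \<Longrightarrow> w \<in> X \<Longrightarrow> strongly_convex_on (\<tau> i) X (\<lambda>z. ft i z w)"
    and ft_grad: "\<And>i z w. i < I \<Longrightarrow> z \<in> Dom \<Longrightarrow> w \<in> Dom \<Longrightarrow>
                    ((\<lambda>u. ft i u w) has_derivative (\<lambda>h. inner (gradft i z w) h)) (at z)"
    and ft_C1: "\<And>i w. i < I \<Longrightarrow> w \<in> Dom \<Longrightarrow> continuous_on Dom (\<lambda>z. gradft i z w)"
    and ft_consistent: "\<And>i z. i < I \<Longrightarrow> z \<in> X \<Longrightarrow> gradft i z z = gradf i z"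
    and ft_Lip: "\<And>i z u v. i < I \<Longrightarrow> z \<in> X \<Longrightarrow> u \<in> X \<Longrightarrow> v \<in> X \<Longrightarrow>
                    norm (gradft i z u - gradft i z v) \<le> Lt i * norm (u - v)"
    (* SONATA iterates *)
    and x0: "\<And>i. i < I \<Longrightarrow> x 0 i \<in> X"
    and phi0: "\<And>i. i < I \<Longrightarrow> \<phi> 0 i = 1"
    and y0: "\<And>i. i < I \<Longrightarrow> y 0 i = gradf i (x 0 i)"
    and xt_in: "\<And>k i. i < I \<Longrightarrow> xt k i \<in> X"
    and xt_min: "\<And>k i z. i < I \<Longrightarrow> z \<in> X \<Longrightarrow>
        ft i (xt k i) (x k i) + inner (of_nat I *\<^sub>R y k i - gradf i (x k i)) (xt k i - x k i) + G (xt k i)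
        \<le> ft i z (x k i) + inner (of_nat I *\<^sub>R y k i - gradf i (x k i)) (z - x k i) + G z"
    and xh_def: "\<And>k i. i < I \<Longrightarrow> xh k i = x k i + \<gamma> k *\<^sub>R (xt k i - x k i)"
    and phi_upd: "\<And>k i. i < I \<Longrightarrow> \<phi> (Suc k) i = (\<Sum>j<I. A k i j * \<phi> k j)"
    and x_upd: "\<And>k i. i < I \<Longrightarrow>
        x (Suc k) i = (1 / \<phi> (Suc k) i) *\<^sub>R (\<Sum>j<I. (A k i j * \<phi> k j) *\<^sub>R xh k j)"
    and y_upd: "\<And>k i. i < I \<Longrightarrow>
        y (Suc k) i = (1 / \<phi> (Suc k) i) *\<^sub>R (\<Sum>j<I. (A k i j * \<phi> k j) *\<^sub>R y k j)
                      + (1 / \<phi> (Suc k) i) *\<^sub>R (gradf i (x (Suc k) i) - gradf i (x k i))"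
  shows "\<forall>i<I.
           ((\<lambda>k. norm (y k i - (1 / of_nat I) *\<^sub>R (\<Sum>j<I. gradf j (x k j)))) \<longlonglongrightarrow> 0)
         \<and> summable (\<lambda>k. \<gamma> k * norm (y k i - (1 / of_nat I) *\<^sub>R (\<Sum>j<I. gradf j (x k j))))"
proof -
  interpret M: mixing I E B A \<kappa>
    by (rule mixing.intro) (fact I_pos B_pos E_sub B_conn \<kappa>_pos A_edge A_diag A_nonneg A_colstoch)+
  have Ipos: "real I > 0" using I_pos by simp
  note phisum = M.phi_facts(1)[OF phi0 phi_upd]
  have philow: "\<phi> k i \<ge> \<kappa> ^ k" if "i < I" for k i using M.phi_facts(2)[OF phi0 phi_upd that] .
  have phipos: "\<phi> k i > 0" if "i < I" for k i using philow[OF that, of k] \<kappa>_pos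
    by (meson less_le_trans zero_less_power)
  have phinn: "\<phi> k i \<ge> 0" if "i < I" for k i using phipos[OF that, of k] by simp
  have kle1: "\<kappa> \<le> 1" by (rule M.kappa_le1)
  define N where "N = I * B"
  define \<delta> where "\<delta> = \<kappa> ^ N"
  have Npos: "N > 0" unfolding N_def using I_pos B_pos by simp
  have dpos: "\<delta> > 0" unfolding \<delta>_def using \<kappa>_pos by simp
  have Id: "real I * \<delta> \<le> 1"
  proof -
    have "real I * \<delta> = (\<Sum>i<I. \<delta>)" by simp
    also have "\<dots> \<le> (\<Sum>i<I. Pm A I 0 N i 0)"
      using M.Pm_pos I_pos unfolding N_def \<delta>_def by (intro sum_mono) auto
    also have "\<dots> = 1" using M.Pm_colsum I_pos by simp
    finally show ?thesis .
  qed
  have phirep: "\<phi> (k0 + t) i = (\<Sum>j<I. Pm A I k0 t i j * \<phi> k0 j)" if "i < I" for k0 t i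
    using that
  proof (induction t arbitrary: i)
    case 0
    have "(\<Sum>j<I. Pm A I k0 0 i j * \<phi> k0 j) = (\<Sum>j<I. if i = j then \<phi> k0 j else 0)"
      by (intro sum.cong) auto
    then show ?case using 0 by (simp add: sum.delta)
  next
    case (Suc t)
    have "\<phi> (k0 + Suc t) i = (\<Sum>l<I. A (k0 + t) i l * (\<Sum>j<I. Pm A I k0 t l j * \<phi> k0 j))"
      using phi_upd[OF Suc.prems, of "k0 + t"] Suc.IH by simp
    also have "\<dots> = (\<Sum>j<I. Pm A I k0 (Suc t) i j * \<phi> k0 j)"
      by (simp add: sum_distrib_left sum_distrib_right mult.assoc) (rule sum.swap)
    finally show ?case .
  qed
  have phieta: "\<phi> k i \<ge> \<delta>" if i: "i < I" for k i
  proof (cases "k < N")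
    case True
    have "\<delta> \<le> \<kappa> ^ k" unfolding \<delta>_def using True kle1 \<kappa>_pos by (intro power_decreasing) auto
    then show ?thesis using philow[OF i, of k] by simp
  next
    case False
    then obtain k0 where k: "k = k0 + N" by (metis add.commute le_add_diff_inverse not_less)
    have "\<delta> \<le> real I * \<delta>" using I_pos dpos by simp
    also have "\<dots> = (\<Sum>j<I. \<delta> * \<phi> k0 j)" using phisum[of k0] by (simp add: sum_distrib_left[symmetric])
    also have "\<dots> \<le> (\<Sum>j<I. Pm A I k0 N i j * \<phi> k0 j)"
      using M.Pm_pos i phinn unfolding N_def \<delta>_def by (intro sum_mono mult_right_mono) auto
    also have "\<dots> = \<phi> k i" using phirep[OF i] k by simp
    finally show ?thesis .
  qed
  have phile: "\<phi> k i \<le> real I" if "i < I" for k i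
  proof -
    have "\<phi> k i \<le> (\<Sum>j<I. \<phi> k j)" using that phinn by (intro member_le_sum) auto
    then show ?thesis using phisum by simp
  qed

  have wsum1: "(\<Sum>j<I. A k i j * \<phi> k j / \<phi> (Suc k) i) = 1" if i: "i < I" for k i
    using phi_upd[OF i, of k] phipos[OF i, of "Suc k"] by (simp add: sum_divide_distrib[symmetric])
  have wnn: "0 \<le> A k i j * \<phi> k j / \<phi> (Suc k) i" if "i < I" "j < I" for k i j
    using that A_nonneg phinn phipos by (simp add: less_imp_le)
  have x_alt: "x (Suc k) i = (\<Sum>j<I. (A k i j * \<phi> k j / \<phi> (Suc k) i) *\<^sub>R xh k j)" if i: "i < I" for k i
    using x_upd[OF i, of k] by (simp add: scaleR_sum_right)
  have xX: "\<forall>i<I. x k i \<in> X" for k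
  proof (induction k)
    case 0 then show ?case using x0 by simp
  next
    case (Suc k)
    have xhX: "xh k j \<in> X" if j: "j < I" for j
    proof -
      have "xh k j = (1 - \<gamma> k) *\<^sub>R x k j + \<gamma> k *\<^sub>R xt k j"
        using xh_def[OF j, of k] by (simp add: algebra_simps)
      also have "\<dots> \<in> X" using Suc j xt_in \<gamma>_pos \<gamma>_le1
        by (intro convexD[OF X_convex]) (auto simp: less_imp_le)
      finally show ?thesis .
    qed
    show ?case
    proof (intro allI impI)
      fix i assume i: "i < I"
      show "x (Suc k) i \<in> X" unfolding x_alt[OF i]
        by (rule convex_sum[OF _ X_convex]) (use wsum1[OF i] wnn[OF i] xhX in auto)
    qed
  qed
  define w where "w = (\<lambda>k i. \<phi> k i *\<^sub>R x k i)"
  define ex where "ex = (\<lambda>k i. \<Sum>j<I. A k i j *\<^sub>R ((\<phi> k j * \<gamma> k) *\<^sub>R (xt k j - x k j)))"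
  have w_upd: "w (Suc k) i = (\<Sum>j<I. A k i j *\<^sub>R w k j) + ex k i" if i: "i < I" for k i
  proof -
    have "w (Suc k) i = (\<Sum>j<I. (A k i j * \<phi> k j) *\<^sub>R xh k j)"
      unfolding w_def using x_upd[OF i, of k] phipos[OF i, of "Suc k"] by simp
    also have "\<dots> = (\<Sum>j<I. A k i j *\<^sub>R w k j + A k i j *\<^sub>R ((\<phi> k j * \<gamma> k) *\<^sub>R (xt k j - x k j)))"
      by (intro sum.cong refl) (simp add: xh_def w_def scaleR_add_right)
    finally show ?thesis unfolding ex_def by (simp add: sum.distrib)
  qed
  define z where "z = (\<lambda>k i. \<phi> k i *\<^sub>R y k i)"
  define ey where "ey = (\<lambda>k i. gradf i (x (Suc k) i) - gradf i (x k i))"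
  have z_upd: "z (Suc k) i = (\<Sum>j<I. A k i j *\<^sub>R z k j) + ey k i" if i: "i < I" for k i
  proof -
    have "z (Suc k) i = (\<Sum>j<I. (A k i j * \<phi> k j) *\<^sub>R y k j) + ey k i"
      unfolding z_def ey_def using y_upd[OF i, of k] phipos[OF i, of "Suc k"] by (simp add: scaleR_add_right)
    then show ?thesis unfolding z_def by simp
  qed
  have zsum: "(\<Sum>j<I. z k j) = (\<Sum>j<I. gradf j (x k j))" for k
  proof (induction k)
    case 0 then show ?case unfolding z_def using phi0 y0 by simp
  next
    case (Suc k)
    have "(\<Sum>j<I. z (Suc k) j) = (\<Sum>i<I. \<Sum>j<I. A k i j *\<^sub>R z k j) + (\<Sum>i<I. ey k i)"
      using z_upd by (simp add: sum.distrib)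
    also have "(\<Sum>i<I. \<Sum>j<I. A k i j *\<^sub>R z k j) = (\<Sum>j<I. (\<Sum>i<I. A k i j) *\<^sub>R z k j)"
      by (subst sum.swap) (simp add: scaleR_sum_left)
    also have "\<dots> = (\<Sum>j<I. z k j)" using A_colstoch by simp
    finally show ?case using Suc unfolding ey_def by (simp add: sum_subtractf)
  qed
  define xbar where "xbar = (\<lambda>k. (1 / real I) *\<^sub>R (\<Sum>j<I. w k j))"
  define ybar where "ybar = (\<lambda>k. (1 / real I) *\<^sub>R (\<Sum>j<I. gradf j (x k j)))"
  define rw where "rw = (\<lambda>k i. w k i - (\<phi> k i / real I) *\<^sub>R (\<Sum>j<I. w k j))"
  define rz where "rz = (\<lambda>k i. z k i - (\<phi> k i / real I) *\<^sub>R (\<Sum>j<I. z k j))"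
  have rw_eq: "rw k i = \<phi> k i *\<^sub>R (x k i - xbar k)" for k i
    unfolding rw_def w_def xbar_def by (simp add: scaleR_diff_right)
  have rz_eq: "rz k i = \<phi> k i *\<^sub>R (y k i - ybar k)" for k i
    unfolding rz_def zsum ybar_def by (simp add: z_def scaleR_diff_right)
  have xbarX: "xbar k \<in> X" for k
  proof -
    have "xbar k = (\<Sum>j<I. (\<phi> k j / real I) *\<^sub>R x k j)"
      unfolding xbar_def w_def by (simp add: scaleR_sum_right)
    also have "\<dots> \<in> X"
      by (rule convex_sum[OF _ X_convex]) (use phisum Ipos phinn xX in \<open>auto simp: sum_divide_distrib[symmetric]\<close>)
    finally show ?thesis .
  qed
  note PSx = M.pushsum[OF phi0 phi_upd w_upd]
  note PSy = M.pushsum[OF phi0 phi_upd z_upd]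

  define Ls where "Ls = (\<Sum>i<I. \<bar>L i\<bar>)"
  have Ls_ge: "\<bar>L i\<bar> \<le> Ls" if "i < I" for i
    unfolding Ls_def using that by (intro member_le_sum) auto
  have Lsnn: "0 \<le> Ls" unfolding Ls_def by (simp add: sum_nonneg)
  define Rx where "Rx = (\<lambda>k. \<Sum>i<I. norm (rw k i))"
  define Ry where "Ry = (\<lambda>k. \<Sum>i<I. norm (rz k i))"
  define Ds where "Ds = (\<lambda>k. \<Sum>i<I. norm (x k i - xbar k))"
  define Es where "Es = (\<lambda>k. \<Sum>i<I. norm (y k i - ybar k))"
  define ds where "ds = (\<lambda>k. \<Sum>i<I. norm (xt k i - x k i))"
  have Dsnn: "0 \<le> Ds k" for k unfolding Ds_def by (simp add: sum_nonneg)
  have Esnn: "0 \<le> Es k" for k unfolding Es_def by (simp add: sum_nonneg)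
  have dsnn: "0 \<le> ds k" for k unfolding ds_def by (simp add: sum_nonneg)
  have Rxnn: "0 \<le> Rx k" for k unfolding Rx_def by (simp add: sum_nonneg)
  have Rynn: "0 \<le> Ry k" for k unfolding Ry_def by (simp add: sum_nonneg)
  have Rx1: "Rx (Suc k) \<le> Rx k + 2 * (\<Sum>i<I. norm (ex k i))" for k
    using PSx(1)[of k] unfolding Rx_def rw_def .
  have Rx2: "Rx (k + N) \<le> (1 - real I * \<delta>) * Rx k + (\<Sum>s<N. 2 * (\<Sum>i<I. norm (ex (k + s) i)))" for k
    using PSx(2)[of k] unfolding Rx_def rw_def N_def \<delta>_def .
  have Ry1: "Ry (Suc k) \<le> Ry k + 2 * (\<Sum>i<I. norm (ey k i))" for k
    using PSy(1)[of k] unfolding Ry_def rz_def .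
  have Ry2: "Ry (k + N) \<le> (1 - real I * \<delta>) * Ry k + (\<Sum>s<N. 2 * (\<Sum>i<I. norm (ey (k + s) i)))" for k
    using PSy(2)[of k] unfolding Ry_def rz_def N_def \<delta>_def .
  have Ds_Rx: "Ds k \<le> Rx k / \<delta>" for k
  proof -
    have "Ds k = (\<Sum>i<I. norm (rw k i) / \<phi> k i)"
      unfolding Ds_def rw_eq using phipos by (intro sum.cong) (auto simp: less_imp_le dest: phipos[of _ k])
    also have "\<dots> \<le> (\<Sum>i<I. norm (rw k i) / \<delta>)"
      using phieta dpos phipos by (intro sum_mono divide_left_mono) auto
    finally show ?thesis unfolding Rx_def by (simp add: sum_divide_distrib)
  qed
  have Es_Ry: "Es k \<le> Ry k / \<delta>" for k
  proof -
    have "Es k = (\<Sum>i<I. norm (rz k i) / \<phi> k i)"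
      unfolding Es_def rz_eq using phipos by (intro sum.cong) (auto simp: less_imp_le dest: phipos[of _ k])
    also have "\<dots> \<le> (\<Sum>i<I. norm (rz k i) / \<delta>)"
      using phieta dpos phipos by (intro sum_mono divide_left_mono) auto
    finally show ?thesis unfolding Ry_def by (simp add: sum_divide_distrib)
  qed
  have ex_bd: "(\<Sum>i<I. norm (ex k i)) \<le> real I * \<gamma> k * ds k" for k
  proof -
    have "(\<Sum>i<I. norm (ex k i)) \<le> 1 * (\<Sum>j<I. norm ((\<phi> k j * \<gamma> k) *\<^sub>R (xt k j - x k j)))"
      unfolding ex_def by (rule sum_norm_mix) (use A_nonneg A_colstoch in auto)
    also have "\<dots> \<le> (\<Sum>j<I. real I * \<gamma> k * norm (xt k j - x k j))"
    proof (simp only: mult_1_left, rule sum_mono)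
      fix j assume j: "j \<in> {..<I}"
      have "norm ((\<phi> k j * \<gamma> k) *\<^sub>R (xt k j - x k j)) = (\<phi> k j * \<gamma> k) * norm (xt k j - x k j)"
        using phinn[of j k] \<gamma>_pos[of k] j by (simp add: abs_mult)
      also have "\<dots> \<le> (real I * \<gamma> k) * norm (xt k j - x k j)"
        using phile[of j k] \<gamma>_pos[of k] j by (intro mult_right_mono) auto
      finally show "norm ((\<phi> k j * \<gamma> k) *\<^sub>R (xt k j - x k j)) \<le> real I * \<gamma> k * norm (xt k j - x k j)" .
    qed
    finally show ?thesis unfolding ds_def by (simp add: sum_distrib_left)
  qed

  have dx_bd: "(\<Sum>i<I. norm (x (Suc k) i - x k i)) \<le> real I * (2 * Ds k + \<gamma> k * ds k)" for k
  proof -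
    have each: "norm (x (Suc k) i - x k i) \<le> (\<Sum>j<I. norm (x k j - xbar k) + norm (x k i - xbar k) + \<gamma> k * norm (xt k j - x k j))"
      if i: "i < I" for i
    proof -
      let ?a = "\<lambda>j. A k i j * \<phi> k j / \<phi> (Suc k) i"
      have "x (Suc k) i - x k i = (\<Sum>j<I. ?a j *\<^sub>R xh k j) - (\<Sum>j<I. ?a j) *\<^sub>R x k i"
        using x_alt[OF i, of k] wsum1[OF i, of k] by simp
      also have "\<dots> = (\<Sum>j<I. ?a j *\<^sub>R (xh k j - x k i))"
        by (simp add: scaleR_diff_right sum_subtractf scaleR_sum_left)
      finally have "norm (x (Suc k) i - x k i) \<le> (\<Sum>j<I. norm (?a j *\<^sub>R (xh k j - x k i)))"
        by (metis norm_sum)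
      also have "\<dots> \<le> (\<Sum>j<I. norm (xh k j - x k i))"
      proof (rule sum_mono)
        fix j assume j: "j \<in> {..<I}"
        have a1: "?a j \<le> 1"
        proof -
          have "?a j \<le> (\<Sum>l<I. ?a l)" using j wnn[OF i] by (intro member_le_sum) auto
          then show ?thesis using wsum1[OF i] by simp
        qed
        have ab: "\<bar>?a j\<bar> = ?a j" using wnn[OF i, of j k] j by (intro abs_of_nonneg) auto
        have "norm (?a j *\<^sub>R (xh k j - x k i)) = ?a j * norm (xh k j - x k i)"
          by (simp only: norm_scaleR ab)
        also have "\<dots> \<le> 1 * norm (xh k j - x k i)" using a1 by (intro mult_right_mono) auto
        finally show "norm (?a j *\<^sub>R (xh k j - x k i)) \<le> norm (xh k j - x k i)" by simp
      qed
      also have "\<dots> \<le> (\<Sum>j<I. norm (x k j - xbar k) + norm (x k i - xbar k) + \<gamma> k * norm (xt k j - x k j))"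
      proof (rule sum_mono)
        fix j assume j: "j \<in> {..<I}"
        have "xh k j - x k i = (x k j - xbar k) - (x k i - xbar k) + \<gamma> k *\<^sub>R (xt k j - x k j)"
          using xh_def[of j k] j by simp
        then have "norm (xh k j - x k i) \<le> norm ((x k j - xbar k) - (x k i - xbar k)) + norm (\<gamma> k *\<^sub>R (xt k j - x k j))"
          by (metis norm_triangle_ineq)
        also have "\<dots> \<le> norm (x k j - xbar k) + norm (x k i - xbar k) + \<gamma> k * norm (xt k j - x k j)"
          using norm_triangle_ineq4[of "x k j - xbar k" "x k i - xbar k"] \<gamma>_pos[of k] by simp
        finally show "norm (xh k j - x k i) \<le> norm (x k j - xbar k) + norm (x k i - xbar k) + \<gamma> k * norm (xt k j - x k j)" .
      qed
      finally show ?thesis .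
    qed
    have "(\<Sum>i<I. norm (x (Suc k) i - x k i)) \<le> (\<Sum>i<I. \<Sum>j<I. norm (x k j - xbar k) + norm (x k i - xbar k) + \<gamma> k * norm (xt k j - x k j))"
      using each by (intro sum_mono) auto
    also have "\<dots> = real I * Ds k + real I * Ds k + real I * (\<gamma> k * ds k)"
      unfolding Ds_def ds_def by (simp add: sum.distrib sum_distrib_left)
    finally show ?thesis by (simp add: algebra_simps)
  qed
  have ey_bd: "(\<Sum>i<I. norm (ey k i)) \<le> Ls * (real I * (2 * Ds k + \<gamma> k * ds k))" for k
  proof -
    have "(\<Sum>i<I. norm (ey k i)) \<le> (\<Sum>i<I. Ls * norm (x (Suc k) i - x k i))"
    proof (rule sum_mono)
      fix i assume i: "i \<in> {..<I}"
      have "norm (ey k i) \<le> L i * norm (x (Suc k) i - x k i)"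
        unfolding ey_def using f_Lip xX i by auto
      also have "\<dots> \<le> Ls * norm (x (Suc k) i - x k i)"
        using Ls_ge[of i] i by (intro mult_right_mono) auto
      finally show "norm (ey k i) \<le> Ls * norm (x (Suc k) i - x k i)" .
    qed
    also have "\<dots> \<le> Ls * (real I * (2 * Ds k + \<gamma> k * ds k))"
      using dx_bd[of k] Lsnn by (simp add: sum_distrib_left[symmetric] mult_left_mono)
    finally show ?thesis .
  qed

  have LFnn: "0 \<le> LF" using gradF_bdd[OF xX[rule_format, OF I_pos, of 0]] norm_ge_zero by (rule order.trans[rotated])
  have LGnn: "0 \<le> LG"
  proof -
    obtain g where "is_subgradient Dom G (x 0 0) g"
      using subgrad_exists[OF G_convex O_open] X_sub_O xX I_pos by blast
    then show ?thesis using subgrad_bdd xX I_pos by (meson norm_ge_zero order.trans)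
  qed
  define Tinv where "Tinv = (\<Sum>i<I. 1 / \<tau> i)"
  have Tinv_ge: "1 / \<tau> i \<le> Tinv" if "i < I" for i
    unfolding Tinv_def using that \<tau>_pos by (intro member_le_sum) (auto simp: less_imp_le)
  have Tinvnn: "0 \<le> Tinv" unfolding Tinv_def using \<tau>_pos by (intro sum_nonneg) (simp add: less_imp_le)
  have ybar_bd: "real I * norm (ybar k) \<le> LF + Ls * Ds k" for k
  proof -
    have "norm (\<Sum>j<I. gradf j (x k j)) \<le> norm (\<Sum>j<I. gradf j (xbar k)) + norm (\<Sum>j<I. gradf j (x k j) - gradf j (xbar k))"
    proof -
      have "(\<Sum>j<I. gradf j (x k j)) = (\<Sum>j<I. gradf j (xbar k)) + (\<Sum>j<I. gradf j (x k j) - gradf j (xbar k))"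
        by (simp add: sum_subtractf)
      then show ?thesis by (simp only: norm_triangle_ineq)
    qed
    also have "\<dots> \<le> LF + (\<Sum>j<I. Ls * norm (x k j - xbar k))"
    proof (rule add_mono)
      show "norm (\<Sum>j<I. gradf j (xbar k)) \<le> LF" using gradF_bdd[OF xbarX] .
      have "norm (\<Sum>j<I. gradf j (x k j) - gradf j (xbar k)) \<le> (\<Sum>j<I. norm (gradf j (x k j) - gradf j (xbar k)))"
        by (rule norm_sum)
      also have "\<dots> \<le> (\<Sum>j<I. Ls * norm (x k j - xbar k))"
      proof (rule sum_mono)
        fix j assume j: "j \<in> {..<I}"
        have "norm (gradf j (x k j) - gradf j (xbar k)) \<le> L j * norm (x k j - xbar k)"
          using f_Lip xX xbarX j by auto
        also have "\<dots> \<le> Ls * norm (x k j - xbar k)" using Ls_ge[of j] j by (intro mult_right_mono) auto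
        finally show "norm (gradf j (x k j) - gradf j (xbar k)) \<le> Ls * norm (x k j - xbar k)" .
      qed
      finally show "norm (\<Sum>j<I. gradf j (x k j) - gradf j (xbar k)) \<le> (\<Sum>j<I. Ls * norm (x k j - xbar k))" .
    qed
    finally show ?thesis unfolding ybar_def Ds_def using Ipos by (simp add: sum_distrib_left[symmetric])
  qed
  have d_each: "norm (xt k i - x k i) \<le> 2 * (real I * norm (y k i) + LG) / \<tau> i" if i: "i < I" for k i
  proof -
    have xi: "x k i \<in> X" using xX i by simp
    obtain g where g: "is_subgradient Dom G (x k i) g"
      using subgrad_exists[OF G_convex O_open] X_sub_O xi by blast
    have dF: "((\<lambda>z. ft i z (x k i)) has_derivative (\<lambda>h. inner (gradf i (x k i)) h)) (at (x k i))"
      using ft_grad[OF i, of "x k i" "x k i"] ft_consistent[OF i xi] X_sub_O xi by auto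
    have "norm (xt k i - x k i) \<le> 2 * (norm (gradf i (x k i) + (of_nat I *\<^sub>R y k i - gradf i (x k i))) + LG) / \<tau> i"
      by (rule dbound[OF ft_sconv[OF i xi] \<tau>_pos[OF i] xi xt_in[OF i] X_sub_O dF xt_min[OF i xi] g subgrad_bdd[OF xi g]])
    then show ?thesis by simp
  qed
  have ds_bd: "ds k \<le> 2 * Tinv * real I * Es k + 2 * Tinv * real I * Ls * Ds k + 2 * Tinv * real I * (LF + LG)" for k
  proof -
    have "ds k \<le> (\<Sum>i<I. 2 * Tinv * (real I * norm (y k i - ybar k) + (real I * norm (ybar k) + LG)))"
      unfolding ds_def
    proof (rule sum_mono)
      fix i assume i: "i \<in> {..<I}"
      have "norm (xt k i - x k i) \<le> 2 * (real I * norm (y k i) + LG) / \<tau> i" using d_each i by simp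
      also have "\<dots> = 2 * (real I * norm (y k i) + LG) * (1 / \<tau> i)" by simp
      also have "\<dots> \<le> 2 * (real I * norm (y k i - ybar k) + (real I * norm (ybar k) + LG)) * Tinv"
      proof (rule mult_mono)
        have "norm (y k i) \<le> norm (y k i - ybar k) + norm (ybar k)" using norm_triangle_ineq[of "y k i - ybar k" "ybar k"] by simp
        then show "2 * (real I * norm (y k i) + LG) \<le> 2 * (real I * norm (y k i - ybar k) + (real I * norm (ybar k) + LG))"
        proof -
          have "real I * norm (y k i) \<le> real I * (norm (y k i - ybar k) + norm (ybar k))"
            using \<open>norm (y k i) \<le> _\<close> Ipos by (intro mult_left_mono) auto
          then show ?thesis by (simp add: algebra_simps)
        qed
        show "1 / \<tau> i \<le> Tinv" using Tinv_ge i by simp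
        show "0 \<le> 2 * (real I * norm (y k i - ybar k) + (real I * norm (ybar k) + LG))" using LGnn by simp
        show "0 \<le> 1 / \<tau> i" using \<tau>_pos i by (simp add: less_imp_le)
      qed
      finally show "norm (xt k i - x k i) \<le> 2 * Tinv * (real I * norm (y k i - ybar k) + (real I * norm (ybar k) + LG))"
        by (simp add: algebra_simps)
    qed
    also have "\<dots> = 2 * Tinv * (real I * Es k + real I * (real I * norm (ybar k) + LG))"
      unfolding Es_def by (simp add: sum.distrib sum_distrib_left[symmetric])
    also have "\<dots> \<le> 2 * Tinv * (real I * Es k + real I * (LF + Ls * Ds k + LG))"
      using ybar_bd[of k] Tinvnn Ipos by (intro mult_left_mono add_left_mono) auto
    finally show ?thesis by (simp add: algebra_simps)
  qed

  define lam where "lam = 1 - real I * \<delta>"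
  define \<mu> where "\<mu> = 1 - real I * \<delta> / (2 * real N)"
  have Idp: "real I * \<delta> > 0" using Ipos dpos by simp
  have Nr: "real N \<ge> 1" using Npos by simp
  have q: "real I * \<delta> / (2 * real N) \<le> 1 / 2"
    using Id Nr by (simp add: divide_simps)
  have q0: "real I * \<delta> / (2 * real N) > 0" using Idp Nr by simp
  have mu0: "0 < \<mu>" and mu1: "\<mu> < 1" and mule: "\<mu> \<le> 1" using q q0 unfolding \<mu>_def by linarith+
  have lam_le: "lam \<le> \<mu> ^ N"
  proof -
    have "1 + real N * (- (real I * \<delta> / (2 * real N))) \<le> (1 + - (real I * \<delta> / (2 * real N))) ^ N"
      by (rule Bernoulli_inequality) (use q in linarith)
    moreover have "real N * (real I * \<delta> / (2 * real N)) = real I * \<delta> / 2" using Nr by simp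
    ultimately show ?thesis unfolding lam_def \<mu>_def using Idp by simp
  qed
  define exe where "exe = (\<lambda>k. 2 * (real I * \<gamma> k * ds k))"
  define eye where "eye = (\<lambda>k. 2 * (Ls * (real I * (2 * Ds k + \<gamma> k * ds k))))"
  have exenn: "0 \<le> exe k" for k unfolding exe_def using \<gamma>_pos[of k] dsnn[of k] by simp
  have eyenn: "0 \<le> eye k" for k unfolding eye_def using \<gamma>_pos[of k] dsnn[of k] Dsnn[of k] Lsnn by simp
  have cvsum: "(\<Sum>s<k. \<mu> ^ (k - 1 - s) * e s) = cv \<mu> e k" for e k unfolding cv_def by simp
  have Rx_bd: "Rx k \<le> (\<mu> ^ k * Rx 0 + cv \<mu> exe k) / \<mu> ^ N" for k
    unfolding cvsum[symmetric]
  proof (rule conv_bound[OF mu0 mule lam_le Npos Rxnn exenn])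
    fix k show "Rx (Suc k) \<le> Rx k + exe k" using Rx1[of k] ex_bd[of k] unfolding exe_def by simp
  next
    fix k
    have "(\<Sum>s<N. 2 * (\<Sum>i<I. norm (ex (k + s) i))) \<le> (\<Sum>s<N. exe (k + s))"
      unfolding exe_def using ex_bd by (intro sum_mono) simp
    then show "Rx (k + N) \<le> lam * Rx k + (\<Sum>s<N. exe (k + s))" using Rx2[of k] unfolding lam_def by simp
  qed
  have Ry_bd: "Ry k \<le> (\<mu> ^ k * Ry 0 + cv \<mu> eye k) / \<mu> ^ N" for k
    unfolding cvsum[symmetric]
  proof (rule conv_bound[OF mu0 mule lam_le Npos Rynn eyenn])
    fix k show "Ry (Suc k) \<le> Ry k + eye k" using Ry1[of k] ey_bd[of k] unfolding eye_def by simp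
  next
    fix k
    have "(\<Sum>s<N. 2 * (\<Sum>i<I. norm (ey (k + s) i))) \<le> (\<Sum>s<N. eye (k + s))"
      unfolding eye_def using ey_bd by (intro sum_mono) simp
    then show "Ry (k + N) \<le> lam * Ry k + (\<Sum>s<N. eye (k + s))" using Ry2[of k] unfolding lam_def by simp
  qed
  define K where "K = 1 / (\<mu> ^ N * \<delta>)"
  have Kpos: "K > 0" unfolding K_def using mu0 dpos by simp
  have Ds_bd: "Ds k \<le> K * (\<mu> ^ k * Rx 0 + cv \<mu> exe k)" for k
  proof -
    have "Ds k \<le> Rx k / \<delta>" by (rule Ds_Rx)
    also have "\<dots> \<le> ((\<mu> ^ k * Rx 0 + cv \<mu> exe k) / \<mu> ^ N) / \<delta>"
      using Rx_bd[of k] dpos by (intro divide_right_mono) auto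
    finally show ?thesis unfolding K_def by simp
  qed
  have Es_bd: "Es k \<le> K * (\<mu> ^ k * Ry 0 + cv \<mu> eye k)" for k
  proof -
    have "Es k \<le> Ry k / \<delta>" by (rule Es_Ry)
    also have "\<dots> \<le> ((\<mu> ^ k * Ry 0 + cv \<mu> eye k) / \<mu> ^ N) / \<delta>"
      using Ry_bd[of k] dpos by (intro divide_right_mono) auto
    finally show ?thesis unfolding K_def by simp
  qed

  define a where "a = 2 * Tinv * real I"
  define b where "b = 2 * Tinv * real I * Ls"
  define c0 where "c0 = 2 * Tinv * real I * (LF + LG)"
  have abc: "0 \<le> a" "0 \<le> b" "0 \<le> c0" unfolding a_def b_def c0_def using Tinvnn Lsnn LFnn LGnn by auto
  have ds_abc: "ds k \<le> a * Es k + b * Ds k + c0" for k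
    using ds_bd[of k] unfolding a_def b_def c0_def by simp
  define Cx where "Cx = K * (2 * real I) / (1 - \<mu>)"
  define Cy where "Cy = K * (2 * Ls * real I) / (1 - \<mu>)"
  have Cxy: "0 \<le> Cx" "0 \<le> Cy" unfolding Cx_def Cy_def using Kpos mu1 Lsnn by auto
  define v where "v = 2 * Cy"
  define X0 where "X0 = 4 * (1 + v) * (a + b) * (Cx + Cy)"
  have X0nn: "0 \<le> X0" unfolding X0_def v_def using abc Cxy by simp
  define \<delta>0 where "\<delta>0 = 1 / (1 + X0)"
  have d0: "0 < \<delta>0" "\<delta>0 \<le> 1" unfolding \<delta>0_def using X0nn by auto
  define eps where "eps = \<delta>0 * (a + b) * (Cx + Cy)"
  have epsnn: "0 \<le> eps" unfolding eps_def using d0 abc Cxy by simp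
  have eps4: "eps * (4 * (1 + v)) \<le> 1"
  proof -
    have "eps * (4 * (1 + v)) = X0 / (1 + X0)" unfolding eps_def X0_def \<delta>0_def by (simp add: algebra_simps)
    also have "\<dots> \<le> 1" using X0nn by simp
    finally show ?thesis .
  qed
  have gam0: "\<gamma> \<longlonglongrightarrow> 0"
  proof -
    have "(\<lambda>k. (\<gamma> k)\<^sup>2) \<longlonglongrightarrow> 0" using summable_LIMSEQ_zero[OF \<gamma>_sq] .
    then have "(\<lambda>k. sqrt ((\<gamma> k)\<^sup>2)) \<longlonglongrightarrow> sqrt 0" by (rule tendsto_real_sqrt)
    then show ?thesis using \<gamma>_pos by (simp add: less_imp_le)
  qed
  obtain K0 where K0: "\<And>k. k \<ge> K0 \<Longrightarrow> \<gamma> k \<le> \<delta>0"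
  proof -
    have "eventually (\<lambda>k. \<gamma> k < \<delta>0) sequentially" using order_tendstoD(2)[OF gam0 d0(1)] .
    then obtain K0 where "\<And>k. k \<ge> K0 \<Longrightarrow> \<gamma> k < \<delta>0" by (auto simp: eventually_sequentially)
    then show ?thesis using that less_imp_le by blast
  qed
  define Q where "Q = (\<Sum>s<K0. \<gamma> s * ds s)"
  have Qnn: "0 \<le> Q" unfolding Q_def using \<gamma>_pos dsnn by (intro sum_nonneg) (simp add: less_imp_le)
  define \<alpha> where "\<alpha> = K * Rx 0 + Cx * Q + Cx * c0"
  define \<beta> where "\<beta> = K * Ry 0 + Cy * Q + Cy * c0"
  have \<alpha>nn: "0 \<le> \<alpha>" unfolding \<alpha>_def using Kpos Rxnn Cxy Qnn abc by simp
  have \<beta>nn: "0 \<le> \<beta>" unfolding \<beta>_def using Kpos Rynn Cxy Qnn abc by simp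
  define BD where "BD = 4 * (\<alpha> + \<beta>)"
  define BE where "BE = 2 * \<beta> + 2 * (v + 1) * BD"
  have vnn: "0 \<le> v" unfolding v_def using Cxy by simp
  note SG = small_gain[OF \<alpha>nn \<beta>nn vnn epsnn eps4 BD_def BE_def]
  have BDnn: "0 \<le> BD" unfolding BD_def using \<alpha>nn \<beta>nn by simp
  have BEnn: "0 \<le> BE" unfolding BE_def using \<beta>nn vnn BDnn by simp
  have bounded: "Ds k \<le> BD \<and> Es k \<le> BE" for k
  proof (induction k rule: less_induct)
    case (less k)
    define Dd where "Dd = a * BE + b * BD + c0"
    have Ddnn: "0 \<le> Dd" unfolding Dd_def using abc BDnn BEnn by simp
    have dsb: "ds s \<le> Dd" if "s < k" for s
    proof -
      have "ds s \<le> a * Es s + b * Ds s + c0" by (rule ds_abc)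
      also have "\<dots> \<le> a * BE + b * BD + c0" using less[OF that] abc by (intro add_mono mult_left_mono) auto
      finally show ?thesis unfolding Dd_def .
    qed
    have gd: "\<gamma> s * ds s \<le> Q + \<delta>0 * Dd" if "s < k" for s
    proof (cases "s < K0")
      case True
      have "\<gamma> s * ds s \<le> Q" unfolding Q_def using True \<gamma>_pos dsnn
        by (intro member_le_sum) (auto simp: less_imp_le)
      moreover have "0 \<le> \<delta>0 * Dd" using d0 Ddnn by simp
      ultimately show ?thesis by linarith
    next
      case False
      have "\<gamma> s * ds s \<le> \<delta>0 * Dd" using K0[of s] False dsb[OF that] dsnn[of s] \<gamma>_pos[of s] d0
        by (intro mult_mono) auto
      then show ?thesis using Qnn by linarith
    qed
    have dD: "\<delta>0 * Dd \<le> \<delta>0 * (a + b) * (BE + BD) + c0"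
    proof -
      have "\<delta>0 * Dd = \<delta>0 * (a * BE + b * BD) + \<delta>0 * c0" unfolding Dd_def by (simp add: algebra_simps)
      also have "\<delta>0 * (a * BE + b * BD) \<le> \<delta>0 * ((a + b) * (BE + BD))"
        using d0 abc BDnn BEnn by (intro mult_left_mono) (auto simp: algebra_simps)
      also have "\<delta>0 * c0 \<le> 1 * c0" using d0 abc by (intro mult_right_mono) auto
      finally show ?thesis by (simp add: algebra_simps)
    qed
    have cvx: "cv \<mu> exe k \<le> (2 * real I * (Q + \<delta>0 * Dd)) / (1 - \<mu>)"
    proof (rule cv_bdd)
      show "0 \<le> \<mu>" "\<mu> < 1" using mu0 mu1 by auto
      fix s assume s: "s < k"
      show "exe s \<le> 2 * real I * (Q + \<delta>0 * Dd)" unfolding exe_def using gd[OF s] Ipos by simp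
    next
      show "0 \<le> 2 * real I * (Q + \<delta>0 * Dd)" using Qnn d0 Ddnn by simp
    qed
    have cvy: "cv \<mu> eye k \<le> (2 * Ls * real I * (2 * BD + Q + \<delta>0 * Dd)) / (1 - \<mu>)"
    proof (rule cv_bdd)
      show "0 \<le> \<mu>" "\<mu> < 1" using mu0 mu1 by auto
      fix s assume s: "s < k"
      have "2 * Ds s + \<gamma> s * ds s \<le> 2 * BD + (Q + \<delta>0 * Dd)" using gd[OF s] less[OF s] by simp
      then have "Ls * (real I * (2 * Ds s + \<gamma> s * ds s)) \<le> Ls * (real I * (2 * BD + (Q + \<delta>0 * Dd)))"
        using Lsnn Ipos by (intro mult_left_mono) auto
      then show "eye s \<le> 2 * Ls * real I * (2 * BD + Q + \<delta>0 * Dd)" unfolding eye_def by (simp add: algebra_simps)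
    next
      show "0 \<le> 2 * Ls * real I * (2 * BD + Q + \<delta>0 * Dd)" using Lsnn Qnn d0 Ddnn BDnn by simp
    qed
    have muk: "\<mu> ^ k \<le> 1" using mu0 mule by (simp add: power_le_one)
    have "Ds k \<le> K * (\<mu> ^ k * Rx 0 + cv \<mu> exe k)" by (rule Ds_bd)
    also have "\<dots> \<le> K * (1 * Rx 0 + (2 * real I * (Q + \<delta>0 * Dd)) / (1 - \<mu>))"
      using muk Rxnn[of 0] cvx Kpos by (intro mult_left_mono add_mono mult_right_mono) auto
    also have "\<dots> = K * Rx 0 + Cx * Q + Cx * (\<delta>0 * Dd)" unfolding Cx_def by (simp add: algebra_simps add_divide_distrib)
    also have "\<dots> \<le> K * Rx 0 + Cx * Q + Cx * (\<delta>0 * (a + b) * (BE + BD) + c0)"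
      using dD Cxy by (intro add_left_mono mult_left_mono) auto
    also have "\<dots> \<le> \<alpha> + eps * (BE + BD)"
    proof -
      have "Cx * (\<delta>0 * (a + b) * (BE + BD)) \<le> (Cx + Cy) * (\<delta>0 * (a + b) * (BE + BD))"
        using Cxy d0 abc BDnn BEnn by (intro mult_right_mono) auto
      then show ?thesis unfolding \<alpha>_def eps_def by (simp add: algebra_simps)
    qed
    also have "\<dots> \<le> BD" by (rule SG(1))
    finally have D: "Ds k \<le> BD" .
    have "Es k \<le> K * (\<mu> ^ k * Ry 0 + cv \<mu> eye k)" by (rule Es_bd)
    also have "\<dots> \<le> K * (1 * Ry 0 + (2 * Ls * real I * (2 * BD + Q + \<delta>0 * Dd)) / (1 - \<mu>))"
      using muk Rynn[of 0] cvy Kpos by (intro mult_left_mono add_mono mult_right_mono) auto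
    also have "\<dots> = K * Ry 0 + Cy * Q + v * BD + Cy * (\<delta>0 * Dd)" unfolding Cy_def v_def by (simp add: algebra_simps add_divide_distrib)
    also have "\<dots> \<le> K * Ry 0 + Cy * Q + v * BD + Cy * (\<delta>0 * (a + b) * (BE + BD) + c0)"
      using dD Cxy by (intro add_left_mono mult_left_mono) auto
    also have "\<dots> \<le> \<beta> + v * BD + eps * (BE + BD)"
    proof -
      have "Cy * (\<delta>0 * (a + b) * (BE + BD)) \<le> (Cx + Cy) * (\<delta>0 * (a + b) * (BE + BD))"
        using Cxy d0 abc BDnn BEnn by (intro mult_right_mono) auto
      then show ?thesis unfolding \<beta>_def eps_def by (simp add: algebra_simps)
    qed
    also have "\<dots> \<le> BE" by (rule SG(2))
    finally show ?case using D by simp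
  qed

  define Ddall where "Ddall = a * BE + b * BD + c0"
  have dsall: "ds k \<le> Ddall" for k
  proof -
    have "ds k \<le> a * Es k + b * Ds k + c0" by (rule ds_abc)
    also have "\<dots> \<le> a * BE + b * BD + c0" using bounded[of k] abc by (intro add_mono mult_left_mono) auto
    finally show ?thesis unfolding Ddall_def .
  qed
  have Ddnn: "0 \<le> Ddall" using dsall[of 0] dsnn[of 0] by simp
  have mu0': "0 \<le> \<mu>" using mu0 by simp
  have exe_sq: "summable (\<lambda>k. (exe k)\<^sup>2)"
  proof (rule sq_summable_mono[OF sq_summable_cmult[OF \<gamma>_sq, of "2 * real I * Ddall"] exenn])
    fix k show "exe k \<le> 2 * real I * Ddall * \<gamma> k"
      unfolding exe_def using dsall[of k] \<gamma>_pos[of k] Ipos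
      by (simp add: algebra_simps mult_left_mono)
  qed
  have Ds_sq: "summable (\<lambda>k. (Ds k)\<^sup>2)"
  proof (rule sq_summable_mono[OF sq_summable_add[OF geo_sq_summable[OF mu0' mu1, of "K * Rx 0"]
        sq_summable_cmult[OF cv_sq_summable[OF mu0' mu1 exenn exe_sq], of K]] Dsnn])
    fix k show "Ds k \<le> K * Rx 0 * \<mu> ^ k + K * cv \<mu> exe k" using Ds_bd[of k] by (simp add: algebra_simps)
  qed
  have eye_sq: "summable (\<lambda>k. (eye k)\<^sup>2)"
  proof (rule sq_summable_mono[OF sq_summable_add[OF sq_summable_cmult[OF Ds_sq, of "4 * Ls * real I"]
        sq_summable_cmult[OF \<gamma>_sq, of "2 * Ls * real I * Ddall"]] eyenn])
    fix k
    have "Ls * (real I * (\<gamma> k * ds k)) \<le> Ls * (real I * (\<gamma> k * Ddall))"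
      using dsall[of k] \<gamma>_pos[of k] Ipos Lsnn by (intro mult_left_mono) auto
    then show "eye k \<le> 4 * Ls * real I * Ds k + 2 * Ls * real I * Ddall * \<gamma> k"
      unfolding eye_def by (simp add: algebra_simps)
  qed
  have Es_sq: "summable (\<lambda>k. (Es k)\<^sup>2)"
  proof (rule sq_summable_mono[OF sq_summable_add[OF geo_sq_summable[OF mu0' mu1, of "K * Ry 0"]
        sq_summable_cmult[OF cv_sq_summable[OF mu0' mu1 eyenn eye_sq], of K]] Esnn])
    fix k show "Es k \<le> K * Ry 0 * \<mu> ^ k + K * cv \<mu> eye k" using Es_bd[of k] by (simp add: algebra_simps)
  qed
  have Es0: "Es \<longlonglongrightarrow> 0"
  proof -
    have "(\<lambda>k. (Es k)\<^sup>2) \<longlonglongrightarrow> 0" using summable_LIMSEQ_zero[OF Es_sq] .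
    then have "(\<lambda>k. sqrt ((Es k)\<^sup>2)) \<longlonglongrightarrow> sqrt 0" by (rule tendsto_real_sqrt)
    then show ?thesis using Esnn by simp
  qed
  have gEs: "summable (\<lambda>k. \<gamma> k * Es k)"
    by (rule prod_summable[OF \<gamma>_sq Es_sq]) (use \<gamma>_pos Esnn in \<open>auto simp: less_imp_le\<close>)
  show ?thesis
  proof (intro allI impI conjI)
    fix i assume i: "i < I"
    have le0: "norm (y k i - ybar k) \<le> Es k" for k
      unfolding Es_def using i by (intro member_le_sum) auto
    have le: "norm (y k i - (1 / of_nat I) *\<^sub>R (\<Sum>j<I. gradf j (x k j))) \<le> Es k" for k
      using le0[of k] unfolding ybar_def by simp
    show "(\<lambda>k. norm (y k i - (1 / of_nat I) *\<^sub>R (\<Sum>j<I. gradf j (x k j)))) \<longlonglongrightarrow> 0"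
      by (rule tendsto_sandwich[OF _ _ tendsto_const Es0]) (use le in auto)
    show "summable (\<lambda>k. \<gamma> k * norm (y k i - (1 / of_nat I) *\<^sub>R (\<Sum>j<I. gradf j (x k j))))"
    proof (rule summable_comparison_test'[where N=0, OF gEs])
      fix k show "norm (\<gamma> k * norm (y k i - (1 / of_nat I) *\<^sub>R (\<Sum>j<I. gradf j (x k j)))) \<le> \<gamma> k * Es k"
        using le[of k] \<gamma>_pos[of k] by (simp add: mult_left_mono)
    qed
  qed
qed

end
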